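(* Let $m\ge1$. The map sending the double coset $\Gamma(4m)\,g\,\Gamma_\ell(2)$ of $g\in\Gamma_{2m}(2)$ to the cohomology class of $f_{\tau(g)g^{-1}}$ is a well-defined bijection $$\Gamma(4m)\backslash\Gamma_{2m}(2)/\Gamma_\ell(2)\ \cong\ H^1(\mathbb C/\mathbb R,\Gamma(4m))$$ (induced by the short exact sequence $1\to\Gamma(4m)\to\Gamma_{2m}(2)\to\Gamma(4m)\backslash\Gamma_{2m}(2)\to1$).
   Context: $\mathbf{Sp}(2n,\mathbb Z)$: integral $2n\times2n$ matrices $g=\begin{pmatrix}A&B\\C&D\end{pmatrix}$ with ${}^tgJg=J$, $J=\begin{pmatrix}0&I\\-I&0\end{pmatrix}$. $\tau\begin{pmatrix}A&B\\C&D\end{pmatrix}=\begin{pmatrix}A&-B\\-C&D\end{pmatrix}$. $\Gamma(4m)=\{\gamma\in\mathbf{Sp}(2n,\mathbb Z):\gamma\equiv I\bmod4m\}$; $\Gamma_{2m}(2)=\{\begin{pmatrix}A&B\\C&D\end{pmatrix}\in\mathbf{Sp}(2n,\mathbb Z):A,D\equiv I\bmod2,\ B,C\equiv0\bmod2m\}$; $\Gamma_\ell(2)=\{U\in\mathbf{GL}(n,\mathbb Z):U\equiv I\bmod2\}$ embedded via $U\mapsto\mathrm{diag}(U,{}^tU^{-1})$. For $\gamma\in\Gamma(4m)$ with $\gamma\tau(\gamma)=I$, $f_\gamma$ is the 1-cocycle of $\mathrm{Gal}(\mathbb C/\mathbb R)=\{1,\tau\}$ with $f_\gamma(\tau)=\gamma$;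 $f_\gamma,f_{\gamma'}$ are cohomologous if $\gamma'=\tau(h)\gamma h^{-1}$ for some $h\in\Gamma(4m)$; $H^1(\mathbb C/\mathbb R,\Gamma(4m))$ is the set of classes. *)

theory Defs
  imports "Jordan_Normal_Form.Matrix" "HOL-Number_Theory.Cong"
begin

text \<open>Integral 2n x 2n matrices are represented as int mat of dimension 2n x 2n;
  block (A,B;C,D) means rows/columns with index < n belong to the first block.\<close>

definition Jmat :: "nat \<Rightarrow> int mat" where
  "Jmat n = four_block_mat (0\<^sub>m n n) (1\<^sub>m n) (- 1\<^sub>m n) (0\<^sub>m n n)"

definition Sp :: "nat \<Rightarrow> int mat set" where
  "Sp n = {g \<in> carrier_mat (2*n) (2*n). transpose_mat g * Jmat n * g = Jmat n}"

definition tau :: "nat \<Rightarrow> int mat \<Rightarrow> int mat" where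
  "tau n g = mat (dim_row g) (dim_col g)
     (\<lambda>(i,j). if (i < n) = (j < n) then g $$ (i,j) else - g $$ (i,j))"

definition Gamma_princ :: "nat \<Rightarrow> int \<Rightarrow> int mat set" where
  "Gamma_princ n N = {g \<in> Sp n. \<forall>i<2*n. \<forall>j<2*n.
      [g $$ (i,j) = (1\<^sub>m (2*n) :: int mat) $$ (i,j)] (mod N)}"

definition Gamma_2m_2 :: "nat \<Rightarrow> int \<Rightarrow> int mat set" where
  "Gamma_2m_2 n m = {g \<in> Sp n. \<forall>i<2*n. \<forall>j<2*n.
      (if (i < n) = (j < n)
       then [g $$ (i,j) = (1\<^sub>m (2*n) :: int mat) $$ (i,j)] (mod 2)
       else [g $$ (i,j) = 0] (mod 2*m))}"

text \<open>Gamma_l(2) = {U in GL(n,Z) : U = I mod 2}, embedded via U |-> diag(U, (U^t)^{-1}).\<close>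
definition Gamma_l_2 :: "nat \<Rightarrow> int mat set" where
  "Gamma_l_2 n = {four_block_mat U (0\<^sub>m n n) (0\<^sub>m n n) (transpose_mat V) | U V.
      U \<in> carrier_mat n n \<and> V \<in> carrier_mat n n \<and> U * V = 1\<^sub>m n \<and> V * U = 1\<^sub>m n \<and>
      (\<forall>i<n. \<forall>j<n. [U $$ (i,j) = (1\<^sub>m n :: int mat) $$ (i,j)] (mod 2))}"

definition int_mat_inv :: "int mat \<Rightarrow> int mat" where
  "int_mat_inv g = (SOME h. h \<in> carrier_mat (dim_row g) (dim_row g) \<and>
      g * h = 1\<^sub>m (dim_row g) \<and> h * g = 1\<^sub>m (dim_row g))"

text \<open>1-cocycles f_gamma of Gal(C/R) in Gamma(4m): gamma in Gamma(4m) with gamma tau(gamma) = I.\<close>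
definition cocycles :: "nat \<Rightarrow> int \<Rightarrow> int mat set" where
  "cocycles n N = {\<gamma> \<in> Gamma_princ n N. \<gamma> * tau n \<gamma> = 1\<^sub>m (2*n)}"

definition cohomologous :: "nat \<Rightarrow> int \<Rightarrow> int mat rel" where
  "cohomologous n N = {(\<gamma>, \<gamma>'). \<gamma> \<in> cocycles n N \<and> \<gamma>' \<in> cocycles n N \<and>
      (\<exists>h h'. h \<in> Gamma_princ n N \<and> h' \<in> carrier_mat (2*n) (2*n) \<and>
         h * h' = 1\<^sub>m (2*n) \<and> h' * h = 1\<^sub>m (2*n) \<and> \<gamma>' = tau n h * \<gamma> * h')}"

definition H1 :: "nat \<Rightarrow> int \<Rightarrow> int mat set set" where
  "H1 n N = cocycles n N // cohomologous n N"

definition coh_class :: "nat \<Rightarrow> int \<Rightarrow> int mat \<Rightarrow> int mat set" where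
  "coh_class n N \<gamma> = cohomologous n N `` {\<gamma>}"

definition dcoset :: "nat \<Rightarrow> int \<Rightarrow> int mat \<Rightarrow> int mat set" where
  "dcoset n N g = {a * g * u | a u. a \<in> Gamma_princ n N \<and> u \<in> Gamma_l_2 n}"

definition double_cosets :: "nat \<Rightarrow> int \<Rightarrow> int mat set set" where
  "double_cosets n m = dcoset n (4*m) ` Gamma_2m_2 n m"

end

theory Submission
  imports Defs "Jordan_Normal_Form.Determinant"
begin


lemma mult_carrier_sq[simp]: "A \<in> carrier_mat k k \<Longrightarrow> B \<in> carrier_mat k k \<Longrightarrow> A * B \<in> carrier_mat k k"
  by (rule mult_carrier_mat)

lemma sq_assoc: "A \<in> carrier_mat k k \<Longrightarrow> B \<in> carrier_mat k k \<Longrightarrow> C \<in> carrier_mat k k \<Longrightarrow> A * B * C = A * (B * C)"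
  by (rule assoc_mult_mat)


lemma Jmat_carrier[simp]: "Jmat n \<in> carrier_mat (2*n) (2*n)"
  unfolding Jmat_def by (metis mult_2 four_block_carrier_mat one_carrier_mat uminus_carrier_mat zero_carrier_mat)

lemma Jmat_dims[simp]: "dim_row (Jmat n) = 2*n" "dim_col (Jmat n) = 2*n"
  using carrier_matD[OF Jmat_carrier[of n]] by auto

lemma Jmat_index: "i < 2*n \<Longrightarrow> j < 2*n \<Longrightarrow> Jmat n $$ (i,j) =
  (if i < n \<and> j = i + n then 1 else if n \<le> i \<and> i = j + n then -1 else 0)"
  unfolding Jmat_def by (auto simp: index_mat_four_block)

definition sig :: "nat \<Rightarrow> int mat" where
  "sig n = mat (2*n) (2*n) (\<lambda>(i,j). if i = j then (if i < n then 1 else -1) else 0)"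

definition sg :: "nat \<Rightarrow> nat \<Rightarrow> int" where "sg n i = (if i < n then 1 else -1)"

lemma sig_carrier[simp]: "sig n \<in> carrier_mat (2*n) (2*n)"
  and sig_dims[simp]: "dim_row (sig n) = 2*n" "dim_col (sig n) = 2*n"
  unfolding sig_def by auto

lemma sum_delta_int: "i < (N::nat) \<Longrightarrow> (\<Sum>k = 0..<N. (if i = k then (a::int) else 0) * f k) = a * f i"
proof -
  assume i: "i < N"
  have "(\<Sum>k = 0..<N. (if i = k then (a::int) else 0) * f k) = (\<Sum>k = 0..<N. if i = k then a * f i else 0)"
    by (rule sum.cong) auto
  also have "\<dots> = a * f i" using i by (subst sum.delta') auto
  finally show ?thesis .
qed

lemma sum_delta_int': "i < (N::nat) \<Longrightarrow> (\<Sum>k = 0..<N. f k * (if k = i then (a::int) else 0)) = f i * a"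
proof -
  assume i: "i < N"
  have "(\<Sum>k = 0..<N. f k * (if k = i then (a::int) else 0)) = (\<Sum>k = 0..<N. if i = k then f i * a else 0)"
    by (rule sum.cong) auto
  also have "\<dots> = f i * a" using i by (subst sum.delta') auto
  finally show ?thesis .
qed

lemma sig_mult_index: assumes "A \<in> carrier_mat (2*n) nc" "i < 2*n" "j < nc"
  shows "(sig n * A) $$ (i,j) = sg n i * A $$ (i,j)"
proof -
  have "(sig n * A) $$ (i,j) = (\<Sum>k = 0..<2*n. (if i = k then sg n i else 0) * A $$ (k,j))"
    using assms unfolding sig_def sg_def by (auto simp: scalar_prod_def intro!: sum.cong)
  also have "\<dots> = sg n i * A $$ (i,j)" using assms(2) by (rule sum_delta_int)
  finally show ?thesis .
qed

lemma mult_sig_index: assumes "A \<in> carrier_mat nr (2*n)" "i < nr" "j < 2*n"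
  shows "(A * sig n) $$ (i,j) = A $$ (i,j) * sg n j"
proof -
  have "(A * sig n) $$ (i,j) = (\<Sum>k = 0..<2*n. A $$ (i,k) * (if k = j then sg n j else 0))"
    using assms unfolding sig_def sg_def by (auto simp: scalar_prod_def intro!: sum.cong)
  also have "\<dots> = A $$ (i,j) * sg n j" using assms(3) by (rule sum_delta_int')
  finally show ?thesis .
qed

lemma sg_sq[simp]: "sg n i * sg n i = 1" unfolding sg_def by auto

lemma tau_sig: assumes "g \<in> carrier_mat (2*n) (2*n)"
  shows "tau n g = sig n * g * sig n"
proof (rule eq_matI)
  fix i j assume ij: "i < dim_row (sig n * g * sig n)" "j < dim_col (sig n * g * sig n)"
  hence ij': "i < 2*n" "j < 2*n" by auto
  have "(sig n * g * sig n) $$ (i,j) = (sig n * g) $$ (i,j) * sg n j"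
    by (rule mult_sig_index) (use assms ij' in auto)
  also have "\<dots> = sg n i * g $$ (i,j) * sg n j"
    using sig_mult_index[OF assms ij'] by simp
  finally have "(sig n * g * sig n) $$ (i,j) = sg n i * g $$ (i,j) * sg n j" .
  then show "tau n g $$ (i,j) = (sig n * g * sig n) $$ (i,j)"
    using assms ij' unfolding tau_def sg_def by auto
qed (use assms in \<open>auto simp: tau_def\<close>)

lemma tau_dims[simp]: "dim_row (tau n g) = dim_row g" "dim_col (tau n g) = dim_col g"
  unfolding tau_def by auto

lemma tau_carrier[simp]: "g \<in> carrier_mat (2*n) (2*n) \<Longrightarrow> tau n g \<in> carrier_mat (2*n) (2*n)"
  unfolding tau_def by auto

lemma sig_sig: "sig n * sig n = 1\<^sub>m (2*n)"
proof (rule eq_matI)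
  fix i j assume "i < dim_row (1\<^sub>m (2 * n))" "j < dim_col (1\<^sub>m (2 * n))"
  hence ij: "i < 2*n" "j < 2*n" by auto
  have "(sig n * sig n) $$ (i,j) = sg n i * sig n $$ (i,j)" using sig_mult_index[OF sig_carrier ij] by simp
  then show "(sig n * sig n) $$ (i,j) = 1\<^sub>m (2 * n) $$ (i,j)" using ij by (auto simp: sig_def sg_def)
qed auto

lemma sig_transpose: "transpose_mat (sig n) = sig n"
  by (rule eq_matI) (auto simp: sig_def)

lemma sig_J_sig: "sig n * Jmat n * sig n = - Jmat n"
proof (rule eq_matI)
  fix i j assume "i < dim_row (- Jmat n)" "j < dim_col (- Jmat n)"
  hence ij: "i < 2*n" "j < 2*n" by auto
  have "(sig n * Jmat n * sig n) $$ (i,j) = (sig n * Jmat n) $$ (i,j) * sg n j"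
    by (rule mult_sig_index) (use ij in auto)
  also have "\<dots> = sg n i * Jmat n $$ (i,j) * sg n j" using sig_mult_index[OF Jmat_carrier ij] by simp
  finally show "(sig n * Jmat n * sig n) $$ (i,j) = (- Jmat n) $$ (i,j)" using ij
    by (auto simp: Jmat_index sg_def)
qed auto

lemma sig_J_sig': assumes "X \<in> carrier_mat (2*n) (2*n)"
  shows "sig n * (Jmat n * (sig n * X)) = - (Jmat n * X)"
proof -
  have "sig n * (Jmat n * (sig n * X)) = (sig n * Jmat n * sig n) * X"
    using assms by (simp add: sq_assoc[where k="2*n"])
  also have "\<dots> = - (Jmat n * X)" using assms by (simp add: sig_J_sig)
  finally show ?thesis .
qed

lemma J_transpose: "transpose_mat (Jmat n) = - Jmat n"
  by (rule eq_matI) (auto simp: Jmat_index)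

lemma J_mult_vec: assumes "y \<in> carrier_vec (2*n)"
  shows "Jmat n *\<^sub>v y = vec (2*n) (\<lambda>i. if i < n then y $ (i+n) else - y $ (i-n))"
proof (rule eq_vecI)
  fix i assume "i < dim_vec (vec (2*n) (\<lambda>i. if i < n then y $ (i+n) else - y $ (i-n)))"
  hence i: "i < 2*n" by auto
  have "(Jmat n *\<^sub>v y) $ i = (\<Sum>k = 0..<2*n. Jmat n $$ (i,k) * y $ k)"
    using i assms by (auto simp: scalar_prod_def)
  also have "\<dots> = (\<Sum>k = 0..<2*n. (if (if i < n then i + n else i - n) = k then (if i < n then 1 else -1) else 0) * y $ k)"
    using i by (intro sum.cong) (auto simp: Jmat_index)
  also have "\<dots> = (if i < n then 1 else -1) * y $ (if i < n then i + n else i - n)"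
    by (rule sum_delta_int) (use i in auto)
  finally show "(Jmat n *\<^sub>v y) $ i = vec (2*n) (\<lambda>i. if i < n then y $ (i+n) else - y $ (i-n)) $ i"
    using i by auto
qed (use assms in auto)

lemma J_J: "Jmat n * Jmat n = - 1\<^sub>m (2*n)"
proof (rule eq_matI)
  fix i j assume "i < dim_row (- 1\<^sub>m (2 * n))" "j < dim_col (- 1\<^sub>m (2 * n))"
  hence ij: "i < 2*n" "j < 2*n" by auto
  have "(Jmat n * Jmat n) $$ (i,j) = (Jmat n *\<^sub>v col (Jmat n) j) $ i" using ij by simp
  also have "\<dots> = - (1\<^sub>m (2*n)) $$ (i,j)" using ij
    by (subst J_mult_vec) (auto simp: Jmat_index)
  finally show "(Jmat n * Jmat n) $$ (i,j) = (- 1\<^sub>m (2 * n)) $$ (i,j)" using ij by simp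
qed auto

definition mcong :: "int \<Rightarrow> int mat \<Rightarrow> int mat \<Rightarrow> bool" where
  "mcong N A B \<longleftrightarrow> dim_row A = dim_row B \<and> dim_col A = dim_col B \<and>
     (\<forall>i<dim_row A. \<forall>j<dim_col A. [A $$ (i,j) = B $$ (i,j)] (mod N))"

lemma mcong_refl: "mcong N A A" unfolding mcong_def by auto

lemma mcong_sym: "mcong N A B \<Longrightarrow> mcong N B A" unfolding mcong_def by (auto simp: cong_sym)

lemma mcong_trans: "mcong N A B \<Longrightarrow> mcong N B C \<Longrightarrow> mcong N A C"
  unfolding mcong_def by (metis cong_trans)

lemma mcong_dvd: "d dvd N \<Longrightarrow> mcong N A B \<Longrightarrow> mcong d A B"
  unfolding mcong_def by (metis cong_dvd_modulus)

lemma mcong_mult: assumes "mcong N A A'" "mcong N B B'" "dim_col A = dim_row B"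
  shows "mcong N (A * B) (A' * B')"
  unfolding mcong_def
proof (intro conjI allI impI)
  show "dim_row (A * B) = dim_row (A' * B')" "dim_col (A * B) = dim_col (A' * B')"
    using assms unfolding mcong_def by auto
  fix i j assume ij: "i < dim_row (A * B)" "j < dim_col (A * B)"
  have "(A * B) $$ (i,j) = (\<Sum>k = 0..<dim_col A. A $$ (i,k) * B $$ (k,j))"
    using ij assms(3) by (auto simp: scalar_prod_def intro!: sum.cong)
  moreover have "(A' * B') $$ (i,j) = (\<Sum>k = 0..<dim_col A. A' $$ (i,k) * B' $$ (k,j))"
    using ij assms unfolding mcong_def by (auto simp: scalar_prod_def intro!: sum.cong)
  moreover have "[(\<Sum>k = 0..<dim_col A. A $$ (i,k) * B $$ (k,j)) = (\<Sum>k = 0..<dim_col A. A' $$ (i,k) * B' $$ (k,j))] (mod N)"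
    using ij assms unfolding mcong_def by (intro cong_sum cong_mult) auto
  ultimately show "[(A * B) $$ (i,j) = (A' * B') $$ (i,j)] (mod N)" by simp
qed

lemma int_left_right_inverse:
  assumes A: "(A :: int mat) \<in> carrier_mat n n" and B: "B \<in> carrier_mat n n" and AB: "A * B = 1\<^sub>m n"
  shows "B * A = 1\<^sub>m n"
proof -
  have "det A * det B = 1" using det_mult[OF A B] AB by simp
  hence d: "det A \<noteq> 0" by auto
  have adjA: "adj_mat A \<in> carrier_mat n n" "adj_mat A * A = det A \<cdot>\<^sub>m 1\<^sub>m n" using adj_mat[OF A] by auto
  have "adj_mat A = adj_mat A * (A * B)" using AB adjA by simp
  also have "\<dots> = (adj_mat A * A) * B" by (rule sq_assoc[symmetric, OF adjA(1) A B])
  also have "\<dots> = det A \<cdot>\<^sub>m B" using adjA B by (simp add: mult_smult_assoc_mat[of "1\<^sub>m n" n n B n])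
  finally have e1: "adj_mat A = det A \<cdot>\<^sub>m B" .
  have "det A \<cdot>\<^sub>m (B * A) = (det A \<cdot>\<^sub>m B) * A" using A B by (simp add: mult_smult_assoc_mat)
  also have "\<dots> = det A \<cdot>\<^sub>m 1\<^sub>m n" using e1 adjA by simp
  finally have e2: "det A \<cdot>\<^sub>m (B * A) = det A \<cdot>\<^sub>m 1\<^sub>m n" .
  show ?thesis
  proof (rule eq_matI)
    fix i j assume ij: "i < dim_row (1\<^sub>m n)" "j < dim_col (1\<^sub>m n :: int mat)"
    have "(det A \<cdot>\<^sub>m (B * A)) $$ (i,j) = (det A \<cdot>\<^sub>m 1\<^sub>m n) $$ (i,j)" using e2 by simp
    hence "det A * (B * A) $$ (i,j) = det A * (1\<^sub>m n :: int mat) $$ (i,j)" using ij A B by simp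
    thus "(B * A) $$ (i,j) = 1\<^sub>m n $$ (i,j)" using d by simp
  qed (use A B in auto)
qed

lemma mcong_inverse:
  assumes a: "a \<in> carrier_mat k k" "a' \<in> carrier_mat k k" "a' * a = 1\<^sub>m k"
    and b: "b \<in> carrier_mat k k" "b' \<in> carrier_mat k k" "b * b' = 1\<^sub>m k"
    and c: "mcong N a b"
  shows "mcong N a' b'"
proof -
  have "a' = a' * (b * b')" using a b by simp
  moreover have "mcong N (a' * (b * b')) (a' * (a * b'))"
    using a b c by (intro mcong_mult mcong_refl) (auto intro: mcong_mult mcong_refl mcong_sym)
  moreover have "a' * (a * b') = b'" using a b
    by (metis assoc_mult_mat left_mult_one_mat)
  ultimately show ?thesis by simp
qed

lemma Sp_carrier: "g \<in> Sp n \<Longrightarrow> g \<in> carrier_mat (2*n) (2*n)" unfolding Sp_def by auto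

lemma one_Sp: "1\<^sub>m (2*n) \<in> Sp n" unfolding Sp_def by simp

lemma Sp_mult: assumes g: "g \<in> Sp n" and h: "h \<in> Sp n" shows "g * h \<in> Sp n"
proof -
  have gc: "g \<in> carrier_mat (2*n) (2*n)" and hc: "h \<in> carrier_mat (2*n) (2*n)" using g h Sp_carrier by auto
  have "transpose_mat (g * h) * Jmat n * (g * h) = transpose_mat h * (transpose_mat g * Jmat n * g) * h"
    using gc hc by (simp add: transpose_mult sq_assoc[where k="2*n"])
  also have "\<dots> = Jmat n" using g h unfolding Sp_def by auto
  finally show ?thesis using gc hc unfolding Sp_def by auto
qed

lemma Sp_left_inv: assumes g: "g \<in> Sp n"
  shows "(- (Jmat n * transpose_mat g * Jmat n)) * g = 1\<^sub>m (2*n)"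
proof -
  have gc: "g \<in> carrier_mat (2*n) (2*n)" using g Sp_carrier by auto
  have "(- (Jmat n * transpose_mat g * Jmat n)) * g = - (Jmat n * (transpose_mat g * Jmat n * g))"
    using gc by (simp add: sq_assoc[where k="2*n"])
  also have "\<dots> = - (Jmat n * Jmat n)" using g unfolding Sp_def by auto
  also have "\<dots> = 1\<^sub>m (2*n)" by (simp add: J_J)
  finally show ?thesis .
qed

lemma Sp_inverse_Sp: assumes g: "g \<in> Sp n" and h: "h \<in> carrier_mat (2*n) (2*n)" and gh: "g * h = 1\<^sub>m (2*n)"
  shows "h \<in> Sp n"
proof -
  have gc: "g \<in> carrier_mat (2*n) (2*n)" using g Sp_carrier by auto
  have "transpose_mat h * Jmat n * h = transpose_mat h * (transpose_mat g * Jmat n * g) * h"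
    using g unfolding Sp_def by auto
  also have "\<dots> = transpose_mat (g * h) * Jmat n * (g * h)"
    using gc h by (simp add: transpose_mult sq_assoc[where k="2*n"])
  also have "\<dots> = Jmat n" using gh by simp
  finally show ?thesis using h unfolding Sp_def by auto
qed

lemma int_mat_inv_Sp: assumes g: "g \<in> Sp n"
  shows "int_mat_inv g \<in> carrier_mat (2*n) (2*n)" "g * int_mat_inv g = 1\<^sub>m (2*n)"
    "int_mat_inv g * g = 1\<^sub>m (2*n)" "int_mat_inv g \<in> Sp n"
proof -
  have gc: "g \<in> carrier_mat (2*n) (2*n)" using g Sp_carrier by auto
  let ?h = "- (Jmat n * transpose_mat g * Jmat n)"
  have hc: "?h \<in> carrier_mat (2*n) (2*n)" using gc by auto
  have hg: "?h * g = 1\<^sub>m (2*n)" by (rule Sp_left_inv[OF g])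
  have gh: "g * ?h = 1\<^sub>m (2*n)" by (rule int_left_right_inverse[OF hc gc hg])
  have ex: "\<exists>h. h \<in> carrier_mat (dim_row g) (dim_row g) \<and> g * h = 1\<^sub>m (dim_row g) \<and> h * g = 1\<^sub>m (dim_row g)"
    using hc hg gh gc by (intro exI[of _ ?h]) auto
  have "int_mat_inv g \<in> carrier_mat (dim_row g) (dim_row g) \<and> g * int_mat_inv g = 1\<^sub>m (dim_row g) \<and> int_mat_inv g * g = 1\<^sub>m (dim_row g)"
    unfolding int_mat_inv_def by (rule someI_ex[OF ex])
  thus c: "int_mat_inv g \<in> carrier_mat (2*n) (2*n)" and r: "g * int_mat_inv g = 1\<^sub>m (2*n)"
    and "int_mat_inv g * g = 1\<^sub>m (2*n)" using gc by auto
  show "int_mat_inv g \<in> Sp n" by (rule Sp_inverse_Sp[OF g c r])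
qed

lemma int_mat_inv_unique: assumes g: "g \<in> Sp n" and X: "X \<in> carrier_mat (2*n) (2*n)" and Xg: "X * g = 1\<^sub>m (2*n)"
  shows "int_mat_inv g = X"
proof -
  have gc: "g \<in> carrier_mat (2*n) (2*n)" using g Sp_carrier by auto
  note I = int_mat_inv_Sp[OF g]
  have "X = X * (g * int_mat_inv g)" using I X by simp
  also have "\<dots> = (X * g) * int_mat_inv g" using I X gc by (simp add: sq_assoc[where k="2*n"])
  also have "\<dots> = int_mat_inv g" using Xg I by simp
  finally show ?thesis by simp
qed

lemma tau_mult: assumes "g \<in> carrier_mat (2*n) (2*n)" "h \<in> carrier_mat (2*n) (2*n)"
  shows "tau n (g * h) = tau n g * tau n h"
proof -
  have "tau n g * tau n h = sig n * g * (sig n * sig n) * h * sig n"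
    using assms by (simp add: tau_sig sq_assoc[where k="2*n"])
  also have "\<dots> = sig n * (g * h) * sig n" using assms by (simp add: sig_sig sq_assoc[where k="2*n"])
  finally show ?thesis using assms by (simp add: tau_sig)
qed

lemma tau_one: "tau n (1\<^sub>m (2*n)) = 1\<^sub>m (2*n)"
  by (simp add: tau_sig sig_sig)

lemma tau_tau: assumes "g \<in> carrier_mat (2*n) (2*n)" shows "tau n (tau n g) = g"
proof -
  have "tau n (tau n g) = (sig n * sig n) * g * (sig n * sig n)"
    using assms by (simp add: tau_sig sq_assoc[where k="2*n"])
  thus ?thesis using assms by (simp add: sig_sig sq_assoc[where k="2*n"])
qed

lemma tau_Sp: assumes g: "g \<in> Sp n" shows "tau n g \<in> Sp n"
proof -
  have gc: "g \<in> carrier_mat (2*n) (2*n)" using g Sp_carrier by auto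
  have "transpose_mat (tau n g) * Jmat n * tau n g = sig n * transpose_mat g * (sig n * Jmat n * sig n) * g * sig n"
    using gc by (simp add: tau_sig transpose_mult[where n="2*n" and nr="2*n" and nc="2*n"] sig_transpose sq_assoc[where k="2*n"])
  also have "\<dots> = - (sig n * (transpose_mat g * Jmat n * g) * sig n)"
    using gc by (simp add: sig_J_sig' sq_assoc[where k="2*n"])
  also have "\<dots> = - (sig n * Jmat n * sig n)" using g unfolding Sp_def by simp
  also have "\<dots> = Jmat n" by (simp add: sig_J_sig)
  finally show ?thesis using gc unfolding Sp_def by auto
qed

lemma cong_neg_self: "[- x = x] (mod 4 * (m::int)) \<longleftrightarrow> [x = 0] (mod 2 * m)"
proof -
  have "[- x = x] (mod 4 * m) \<longleftrightarrow> (2 * (2 * m)) dvd (2 * x)"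
  proof -
    have "- x - x = - (2 * x)" by simp
    thus ?thesis unfolding cong_iff_dvd_diff by (simp only: dvd_minus_iff) (simp add: mult.assoc)
  qed
  also have "\<dots> \<longleftrightarrow> (2 * m) dvd x" using dvd_mult_cancel_left[of 2 "2*m" x] by (simp only:) simp
  finally show ?thesis by (simp add: cong_0_iff)
qed


lemma Gamma_princ_iff: "g \<in> Gamma_princ n N \<longleftrightarrow> g \<in> Sp n \<and> mcong N g (1\<^sub>m (2*n))"
proof
  assume a: "g \<in> Gamma_princ n N"
  hence s: "g \<in> Sp n" unfolding Gamma_princ_def by auto
  hence c: "dim_row g = 2*n" "dim_col g = 2*n" using Sp_carrier by auto
  from a have "\<forall>i<2*n. \<forall>j<2*n. [g $$ (i,j) = (1\<^sub>m (2*n) :: int mat) $$ (i,j)] (mod N)"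
    unfolding Gamma_princ_def by blast
  thus "g \<in> Sp n \<and> mcong N g (1\<^sub>m (2*n))" unfolding mcong_def using s c by simp
next
  assume a: "g \<in> Sp n \<and> mcong N g (1\<^sub>m (2*n))"
  hence c: "dim_row g = 2*n" "dim_col g = 2*n" using Sp_carrier by auto
  from a have "\<forall>i<dim_row g. \<forall>j<dim_col g. [g $$ (i,j) = (1\<^sub>m (2*n) :: int mat) $$ (i,j)] (mod N)"
    unfolding mcong_def by blast
  thus "g \<in> Gamma_princ n N" unfolding Gamma_princ_def using a c by simp
qed

lemma Gamma_princ_mult: assumes "g \<in> Gamma_princ n N" "h \<in> Gamma_princ n N" shows "g * h \<in> Gamma_princ n N"
proof -
  have gS: "g \<in> Sp n" "mcong N g (1\<^sub>m (2*n))" and hS: "h \<in> Sp n" "mcong N h (1\<^sub>m (2*n))"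
    using assms unfolding Gamma_princ_iff by auto
  have "dim_col g = dim_row h" using Sp_carrier[OF gS(1)] Sp_carrier[OF hS(1)] by auto
  from mcong_mult[OF gS(2) hS(2) this] have "mcong N (g * h) (1\<^sub>m (2*n))" by simp
  thus ?thesis using Sp_mult[OF gS(1) hS(1)] unfolding Gamma_princ_iff by auto
qed

lemma Gamma_princ_inv: assumes g: "g \<in> Gamma_princ n N" and h: "h \<in> carrier_mat (2*n) (2*n)"
  and gh: "g * h = 1\<^sub>m (2*n)" and hg: "h * g = 1\<^sub>m (2*n)"
  shows "h \<in> Gamma_princ n N"
proof -
  have gS: "g \<in> Sp n" and gc: "g \<in> carrier_mat (2*n) (2*n)" and gm: "mcong N g (1\<^sub>m (2*n))"
    using g Sp_carrier unfolding Gamma_princ_iff by auto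
  have "mcong N h (1\<^sub>m (2*n))"
    by (rule mcong_inverse[OF gc h hg _ _ _ gm]) auto
  thus ?thesis using Sp_inverse_Sp[OF gS h gh] unfolding Gamma_princ_iff by auto
qed


lemma Gamma_2m_2_iff: assumes m: "m \<ge> 1"
  shows "g \<in> Gamma_2m_2 n m \<longleftrightarrow> g \<in> Sp n \<and> mcong 2 g (1\<^sub>m (2*n)) \<and> mcong (4*m) (tau n g) g"
proof
  assume g: "g \<in> Gamma_2m_2 n m"
  hence gS: "g \<in> Sp n" and gc: "g \<in> carrier_mat (2*n) (2*n)" using Sp_carrier unfolding Gamma_2m_2_def by auto
  have E: "\<And>i j. i < 2*n \<Longrightarrow> j < 2*n \<Longrightarrow> (if (i < n) = (j < n)
       then [g $$ (i,j) = (1\<^sub>m (2*n) :: int mat) $$ (i,j)] (mod 2)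
       else [g $$ (i,j) = 0] (mod 2*m))" using g unfolding Gamma_2m_2_def by blast
  have "mcong 2 g (1\<^sub>m (2*n))" unfolding mcong_def
  proof (intro conjI allI impI)
    fix i j assume "i < dim_row g" "j < dim_col g"
    hence ij: "i < 2*n" "j < 2*n" using gc by auto
    show "[g $$ (i, j) = 1\<^sub>m (2 * n) $$ (i, j)] (mod 2)"
    proof (cases "(i < n) = (j < n)")
      case True thus ?thesis using E[OF ij] by simp
    next
      case False
      hence "[g $$ (i,j) = 0] (mod 2*m)" using E[OF ij] by simp
      hence "[g $$ (i,j) = 0] (mod 2)" by (rule cong_dvd_modulus) simp
      moreover have "i \<noteq> j" using False by auto
      ultimately show ?thesis using ij by simp
    qed
  qed (use gc in auto)
  moreover have "mcong (4*m) (tau n g) g" unfolding mcong_def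
  proof (intro conjI allI impI)
    fix i j assume "i < dim_row (tau n g)" "j < dim_col (tau n g)"
    hence ij: "i < 2*n" "j < 2*n" using gc by (auto simp: tau_def)
    show "[tau n g $$ (i, j) = g $$ (i, j)] (mod 4 * m)"
    proof (cases "(i < n) = (j < n)")
      case True thus ?thesis using ij gc by (simp add: tau_def)
    next
      case False
      hence "[g $$ (i,j) = 0] (mod 2*m)" using E[OF ij] by simp
      thus ?thesis using ij gc False by (simp add: tau_def cong_neg_self)
    qed
  qed (use gc in \<open>auto simp: tau_def\<close>)
  ultimately show "g \<in> Sp n \<and> mcong 2 g (1\<^sub>m (2*n)) \<and> mcong (4*m) (tau n g) g" using gS by auto
next
  assume A: "g \<in> Sp n \<and> mcong 2 g (1\<^sub>m (2*n)) \<and> mcong (4*m) (tau n g) g"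
  hence gc: "g \<in> carrier_mat (2*n) (2*n)" using Sp_carrier by auto
  show "g \<in> Gamma_2m_2 n m" unfolding Gamma_2m_2_def
  proof (safe)
    show "g \<in> Sp n" using A by auto
    fix i j assume ij: "i < 2*n" "j < 2*n"
    show "if (i < n) = (j < n) then [g $$ (i, j) = 1\<^sub>m (2 * n) $$ (i, j)] (mod 2)
          else [g $$ (i, j) = 0] (mod 2 * m)"
    proof (cases "(i < n) = (j < n)")
      case True thus ?thesis using A ij gc unfolding mcong_def by auto
    next
      case False
      have "[tau n g $$ (i,j) = g $$ (i,j)] (mod 4*m)" using A ij gc unfolding mcong_def by (auto simp: tau_def)
      hence "[- g $$ (i,j) = g $$ (i,j)] (mod 4*m)" using ij gc False by (simp add: tau_def)
      thus ?thesis using False by (simp add: cong_neg_self)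
    qed
  qed
qed


lemma blockdiag_sympl:
  assumes U: "U \<in> carrier_mat n n" and D: "D \<in> carrier_mat n n"
  shows "transpose_mat (four_block_mat U (0\<^sub>m n n) (0\<^sub>m n n) D) * Jmat n * four_block_mat U (0\<^sub>m n n) (0\<^sub>m n n) D
    = four_block_mat (0\<^sub>m n n) (transpose_mat U * D) (- (transpose_mat D * U)) (0\<^sub>m n n)"
proof -
  have t: "transpose_mat (four_block_mat U (0\<^sub>m n n) (0\<^sub>m n n) D) = four_block_mat (transpose_mat U) (0\<^sub>m n n) (0\<^sub>m n n) (transpose_mat D)"
    using U D by (subst transpose_four_block_mat[where ?nr1.0=n and ?nc1.0=n and ?nr2.0=n and ?nc2.0=n]) auto
  have "four_block_mat (transpose_mat U) (0\<^sub>m n n) (0\<^sub>m n n) (transpose_mat D) * Jmat n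
     = four_block_mat (0\<^sub>m n n) (transpose_mat U) (- transpose_mat D) (0\<^sub>m n n)"
    unfolding Jmat_def using U D by (subst mult_four_block_mat[where ?nr1.0=n and ?n1.0=n and ?n2.0=n and ?nr2.0=n and ?nc1.0=n and ?nc2.0=n]) auto
  moreover have "four_block_mat (0\<^sub>m n n) (transpose_mat U) (- transpose_mat D) (0\<^sub>m n n) * four_block_mat U (0\<^sub>m n n) (0\<^sub>m n n) D
     = four_block_mat (0\<^sub>m n n) (transpose_mat U * D) (- (transpose_mat D * U)) (0\<^sub>m n n)"
    using U D by (subst mult_four_block_mat[where ?nr1.0=n and ?n1.0=n and ?n2.0=n and ?nr2.0=n and ?nc1.0=n and ?nc2.0=n]) auto
  ultimately show ?thesis using t by simp
qed

lemma Jmat_four: "Jmat n = four_block_mat (0\<^sub>m n n) (1\<^sub>m n) (- 1\<^sub>m n) (0\<^sub>m n n)"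
  unfolding Jmat_def ..

lemma Gamma_l_2_iff: "u \<in> Gamma_l_2 n \<longleftrightarrow> u \<in> Sp n \<and> mcong 2 u (1\<^sub>m (2*n)) \<and> tau n u = u"
proof
  assume "u \<in> Gamma_l_2 n"
  then obtain U V where u: "u = four_block_mat U (0\<^sub>m n n) (0\<^sub>m n n) (transpose_mat V)"
    and U: "U \<in> carrier_mat n n" and V: "V \<in> carrier_mat n n" and UV: "U * V = 1\<^sub>m n" and VU: "V * U = 1\<^sub>m n"
    and Um: "\<forall>i<n. \<forall>j<n. [U $$ (i,j) = (1\<^sub>m n :: int mat) $$ (i,j)] (mod 2)"
    unfolding Gamma_l_2_def by blast
  have uc: "u \<in> carrier_mat (2*n) (2*n)" unfolding u mult_2 using U V by auto
  have "transpose_mat u * Jmat n * u = four_block_mat (0\<^sub>m n n) (transpose_mat U * transpose_mat V) (- (V * U)) (0\<^sub>m n n)"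
    unfolding u using blockdiag_sympl[OF U, of "transpose_mat V"] V by simp
  also have "transpose_mat U * transpose_mat V = transpose_mat (V * U)" using U V by (simp add: transpose_mult)
  also have "\<dots> = 1\<^sub>m n" using VU by simp
  finally have "transpose_mat u * Jmat n * u = Jmat n" unfolding Jmat_four using VU by simp
  hence uS: "u \<in> Sp n" using uc unfolding Sp_def by auto
  have Um': "mcong 2 U (1\<^sub>m n)" using Um U unfolding mcong_def by auto
  have Vm: "mcong 2 V (1\<^sub>m n)" by (rule mcong_inverse[OF U V VU _ _ _ Um']) auto
  have "mcong 2 u (1\<^sub>m (2*n))" unfolding mcong_def
  proof (intro conjI allI impI)
    fix i j assume "i < dim_row u" "j < dim_col u"
    hence ij: "i < 2*n" "j < 2*n" using uc by auto
    show "[u $$ (i, j) = 1\<^sub>m (2 * n) $$ (i, j)] (mod 2)"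
    proof (cases "i < n")
      case True
      thus ?thesis
      proof (cases "j < n")
        case True thus ?thesis using \<open>i < n\<close> Um ij U V unfolding u by auto
      next
        case False thus ?thesis using \<open>i < n\<close> Um ij U V unfolding u by auto
      qed
    next
      case False
      thus ?thesis
      proof (cases "j < n")
        case True thus ?thesis using \<open>\<not> i < n\<close> Um ij U V unfolding u by auto
      next
        case False
        have "[V $$ (j - n, i - n) = (1\<^sub>m n :: int mat) $$ (j - n, i - n)] (mod 2)"
          using Vm ij False \<open>\<not> i < n\<close> V unfolding mcong_def by auto
        moreover have "(j - n = i - n) = (i = j)" using False \<open>\<not> i < n\<close> by auto
        ultimately show ?thesis using \<open>\<not> i < n\<close> False ij U V unfolding u by auto
      qed
    qed
  qed (use uc in auto)
  moreover have "tau n u = u"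
  proof (rule eq_matI)
    fix i j assume "i < dim_row u" "j < dim_col u"
    hence ij: "i < 2*n" "j < 2*n" using uc by auto
    show "tau n u $$ (i,j) = u $$ (i,j)" using ij uc U V unfolding tau_def by (auto simp: u)
  qed (use uc in \<open>auto simp: tau_def\<close>)
  ultimately show "u \<in> Sp n \<and> mcong 2 u (1\<^sub>m (2*n)) \<and> tau n u = u" using uS by auto
next
  assume A: "u \<in> Sp n \<and> mcong 2 u (1\<^sub>m (2*n)) \<and> tau n u = u"
  hence uc: "u \<in> carrier_mat (2*n) (2*n)" using Sp_carrier by auto
  define U where "U = mat n n (\<lambda>(i,j). u $$ (i,j))"
  define D where "D = mat n n (\<lambda>(i,j). u $$ (i+n,j+n))"
  have U: "U \<in> carrier_mat n n" and D: "D \<in> carrier_mat n n" unfolding U_def D_def by auto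
  have off: "u $$ (i,j) = 0" if ij: "i < 2*n" "j < 2*n" "(i < n) \<noteq> (j < n)" for i j
  proof -
    have "tau n u $$ (i,j) = u $$ (i,j)" using A by simp
    thus ?thesis using ij uc unfolding tau_def by auto
  qed
  have ueq: "u = four_block_mat U (0\<^sub>m n n) (0\<^sub>m n n) D"
  proof (rule eq_matI)
    fix i j assume "i < dim_row (four_block_mat U (0\<^sub>m n n) (0\<^sub>m n n) D)" "j < dim_col (four_block_mat U (0\<^sub>m n n) (0\<^sub>m n n) D)"
    hence ij: "i < 2*n" "j < 2*n" using U D by auto
    show "u $$ (i,j) = four_block_mat U (0\<^sub>m n n) (0\<^sub>m n n) D $$ (i,j)"
      using ij U D off[OF ij] unfolding U_def D_def by auto
  qed (use uc U D in auto)
  have "four_block_mat (0\<^sub>m n n) (transpose_mat U * D) (- (transpose_mat D * U)) (0\<^sub>m n n) = Jmat n"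
    using blockdiag_sympl[OF U D] A ueq unfolding Sp_def by simp
  hence UD: "transpose_mat U * D = 1\<^sub>m n"
  proof -
    assume E: "four_block_mat (0\<^sub>m n n) (transpose_mat U * D) (- (transpose_mat D * U)) (0\<^sub>m n n) = Jmat n"
    show ?thesis
    proof (rule eq_matI)
      fix i j assume "i < dim_row (1\<^sub>m n :: int mat)" "j < dim_col (1\<^sub>m n :: int mat)"
      hence ij: "i < n" "j < n" by auto
      have "four_block_mat (0\<^sub>m n n) (transpose_mat U * D) (- (transpose_mat D * U)) (0\<^sub>m n n) $$ (i, j + n)
        = Jmat n $$ (i, j + n)" using E by simp
      thus "(transpose_mat U * D) $$ (i,j) = 1\<^sub>m n $$ (i,j)" using ij U D unfolding Jmat_four by simp
    qed (use U D in auto)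
  qed
  have DU: "D * transpose_mat U = 1\<^sub>m n" by (rule int_left_right_inverse[OF _ D UD]) (use U in auto)
  have UV: "U * transpose_mat D = 1\<^sub>m n"
  proof -
    have "transpose_mat (D * transpose_mat U) = U * transpose_mat D" using U D by (simp add: transpose_mult)
    thus ?thesis using DU by simp
  qed
  have VU: "transpose_mat D * U = 1\<^sub>m n"
  proof -
    have "transpose_mat (transpose_mat U * D) = transpose_mat D * U" using U D by (simp add: transpose_mult)
    thus ?thesis using UD by simp
  qed
  have Um: "\<forall>i<n. \<forall>j<n. [U $$ (i,j) = (1\<^sub>m n :: int mat) $$ (i,j)] (mod 2)"
  proof (intro allI impI)
    fix i j assume ij: "i < n" "j < n"
    have "[u $$ (i,j) = (1\<^sub>m (2*n) :: int mat) $$ (i,j)] (mod 2)" using A ij uc unfolding mcong_def by auto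
    thus "[U $$ (i,j) = (1\<^sub>m n :: int mat) $$ (i,j)] (mod 2)" using ij unfolding U_def by auto
  qed
  show "u \<in> Gamma_l_2 n" unfolding Gamma_l_2_def
    using ueq U D UV VU Um by (intro CollectI exI[of _ U] exI[of _ "transpose_mat D"]) auto
qed

lemma Gamma_l_2_mult: assumes "u \<in> Gamma_l_2 n" "v \<in> Gamma_l_2 n" shows "u * v \<in> Gamma_l_2 n"
proof -
  have u: "u \<in> Sp n" "mcong 2 u (1\<^sub>m (2*n))" "tau n u = u" and v: "v \<in> Sp n" "mcong 2 v (1\<^sub>m (2*n))" "tau n v = v"
    using assms unfolding Gamma_l_2_iff by auto
  have uc: "u \<in> carrier_mat (2*n) (2*n)" and vc: "v \<in> carrier_mat (2*n) (2*n)" using u v Sp_carrier by auto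
  have "mcong 2 (u * v) (1\<^sub>m (2*n) * 1\<^sub>m (2*n))" by (rule mcong_mult[OF u(2) v(2)]) (use uc vc in auto)
  moreover have "tau n (u * v) = u * v" using tau_mult[OF uc vc] u v by simp
  ultimately show ?thesis using Sp_mult[OF u(1) v(1)] unfolding Gamma_l_2_iff by simp
qed

lemma Gamma_l_2_inv: assumes "u \<in> Gamma_l_2 n" shows "int_mat_inv u \<in> Gamma_l_2 n"
proof -
  have u: "u \<in> Sp n" "mcong 2 u (1\<^sub>m (2*n))" "tau n u = u"
    using assms unfolding Gamma_l_2_iff by auto
  have uc: "u \<in> carrier_mat (2*n) (2*n)" using u Sp_carrier by auto
  note I = int_mat_inv_Sp[OF u(1)]
  have "mcong 2 (int_mat_inv u) (1\<^sub>m (2*n))" by (rule mcong_inverse[OF uc I(1) I(3) _ _ _ u(2)]) auto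
  moreover have "tau n (int_mat_inv u) * u = 1\<^sub>m (2*n)"
    using tau_mult[OF I(1) uc] u(3) I(3) tau_one by simp
  hence "int_mat_inv u = tau n (int_mat_inv u)" by (rule int_mat_inv_unique[OF u(1) tau_carrier[OF I(1)]])
  ultimately show ?thesis using I(4) unfolding Gamma_l_2_iff by simp
qed

lemma one_Gamma_princ: "1\<^sub>m (2*n) \<in> Gamma_princ n N"
  unfolding Gamma_princ_iff using one_Sp mcong_refl by auto

lemma one_Gamma_l_2: "1\<^sub>m (2*n) \<in> Gamma_l_2 n"
  unfolding Gamma_l_2_iff using one_Sp mcong_refl tau_one by auto

lemma Gamma_princ_carrier: "a \<in> Gamma_princ n N \<Longrightarrow> a \<in> carrier_mat (2*n) (2*n)"
  unfolding Gamma_princ_iff using Sp_carrier by auto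

lemma Gamma_l_2_carrier: "a \<in> Gamma_l_2 n \<Longrightarrow> a \<in> carrier_mat (2*n) (2*n)"
  unfolding Gamma_l_2_iff using Sp_carrier by auto

lemma Gamma_princ_inv': "a \<in> Gamma_princ n N \<Longrightarrow> int_mat_inv a \<in> Gamma_princ n N"
  using Gamma_princ_inv int_mat_inv_Sp Gamma_princ_iff by blast

lemma self_dcoset: "g \<in> carrier_mat (2*n) (2*n) \<Longrightarrow> g \<in> dcoset n N g"
  unfolding dcoset_def using one_Gamma_princ one_Gamma_l_2
  by (intro CollectI exI[of _ "1\<^sub>m (2*n)"]) auto

lemma dcoset_eq: assumes g: "g \<in> carrier_mat (2*n) (2*n)" and a: "a \<in> Gamma_princ n N" and u: "u \<in> Gamma_l_2 n"
  shows "dcoset n N (a * g * u) = dcoset n N g"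
proof
  have ac: "a \<in> carrier_mat (2*n) (2*n)" and uc: "u \<in> carrier_mat (2*n) (2*n)"
    using a u Gamma_princ_carrier Gamma_l_2_carrier by auto
  show "dcoset n N (a * g * u) \<subseteq> dcoset n N g"
  proof
    fix x assume "x \<in> dcoset n N (a * g * u)"
    then obtain b v where x: "x = b * (a * g * u) * v" and b: "b \<in> Gamma_princ n N" and v: "v \<in> Gamma_l_2 n"
      unfolding dcoset_def by blast
    have bc: "b \<in> carrier_mat (2*n) (2*n)" and vc: "v \<in> carrier_mat (2*n) (2*n)"
      using b v Gamma_princ_carrier Gamma_l_2_carrier by auto
    have "x = (b * a) * g * (u * v)" unfolding x using ac bc uc vc g by (simp add: sq_assoc[where k="2*n"])
    thus "x \<in> dcoset n N g" unfolding dcoset_def using Gamma_princ_mult[OF b a] Gamma_l_2_mult[OF u v] by blast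
  qed
  show "dcoset n N g \<subseteq> dcoset n N (a * g * u)"
  proof
    fix x assume "x \<in> dcoset n N g"
    then obtain b v where x: "x = b * g * v" and b: "b \<in> Gamma_princ n N" and v: "v \<in> Gamma_l_2 n"
      unfolding dcoset_def by blast
    have bc: "b \<in> carrier_mat (2*n) (2*n)" and vc: "v \<in> carrier_mat (2*n) (2*n)"
      using b v Gamma_princ_carrier Gamma_l_2_carrier by auto
    have aS: "a \<in> Sp n" and uS: "u \<in> Sp n" using a u unfolding Gamma_princ_iff Gamma_l_2_iff by auto
    note IA = int_mat_inv_Sp[OF aS] and IU = int_mat_inv_Sp[OF uS]
    have "(b * int_mat_inv a) * (a * g * u) * (int_mat_inv u * v) = b * (int_mat_inv a * a) * g * (u * int_mat_inv u) * v"
      using ac bc uc vc g IA(1) IU(1) by (simp add: sq_assoc[where k="2*n"])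
    also have "\<dots> = x" unfolding x using IA IU bc g vc by simp
    finally show "x \<in> dcoset n N (a * g * u)" unfolding dcoset_def
      using Gamma_princ_mult[OF b Gamma_princ_inv'[OF a]] Gamma_l_2_mult[OF Gamma_l_2_inv[OF u] v] by blast
  qed
qed

definition gam :: "nat \<Rightarrow> int mat \<Rightarrow> int mat" where "gam n g = tau n g * int_mat_inv g"

lemma gam_props: assumes g: "g \<in> Sp n"
  shows "gam n g \<in> carrier_mat (2*n) (2*n)" "gam n g * g = tau n g"
proof -
  have gc: "g \<in> carrier_mat (2*n) (2*n)" using g Sp_carrier by auto
  note I = int_mat_inv_Sp[OF g]
  show "gam n g \<in> carrier_mat (2*n) (2*n)" unfolding gam_def using I gc by auto
  have "gam n g * g = tau n g * (int_mat_inv g * g)" unfolding gam_def using I gc by (simp add: sq_assoc[where k="2*n"])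
  thus "gam n g * g = tau n g" using I gc by simp
qed

lemma gam_unique: assumes g: "g \<in> Sp n" and X: "X \<in> carrier_mat (2*n) (2*n)" and Xg: "X * g = tau n g"
  shows "X = gam n g"
proof -
  have gc: "g \<in> carrier_mat (2*n) (2*n)" using g Sp_carrier by auto
  note I = int_mat_inv_Sp[OF g]
  have "X = X * (g * int_mat_inv g)" using I X by simp
  also have "\<dots> = (X * g) * int_mat_inv g" using I X gc by (simp add: sq_assoc[where k="2*n"])
  finally show ?thesis unfolding gam_def Xg .
qed

lemma G_Sp: "m \<ge> 1 \<Longrightarrow> g \<in> Gamma_2m_2 n m \<Longrightarrow> g \<in> Sp n" using Gamma_2m_2_iff by blast

lemma gam_cocycle: assumes m: "m \<ge> 1" and g: "g \<in> Gamma_2m_2 n m"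
  shows "gam n g \<in> cocycles n (4*m)"
proof -
  have gS: "g \<in> Sp n" and gm: "mcong (4*m) (tau n g) g" using g Gamma_2m_2_iff[OF m] by auto
  have gc: "g \<in> carrier_mat (2*n) (2*n)" using gS Sp_carrier by auto
  note I = int_mat_inv_Sp[OF gS]
  have S: "gam n g \<in> Sp n" unfolding gam_def by (rule Sp_mult[OF tau_Sp[OF gS] I(4)])
  have "mcong (4*m) (tau n g * int_mat_inv g) (g * int_mat_inv g)"
    by (rule mcong_mult[OF gm mcong_refl]) (use gc I in auto)
  hence M: "mcong (4*m) (gam n g) (1\<^sub>m (2*n))" unfolding gam_def using I by simp
  have "tau n (gam n g) = g * tau n (int_mat_inv g)" unfolding gam_def
    using tau_mult[OF tau_carrier[OF gc] I(1)] tau_tau[OF gc] by simp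
  hence "gam n g * tau n (gam n g) = tau n g * (int_mat_inv g * g) * tau n (int_mat_inv g)"
    unfolding gam_def using gc I(1) by (simp add: sq_assoc[where k="2*n"])
  also have "\<dots> = tau n (g * int_mat_inv g)" using gc I tau_mult[OF gc I(1)] by simp
  also have "\<dots> = 1\<^sub>m (2*n)" using I tau_one by simp
  finally show ?thesis unfolding cocycles_def using S M Gamma_princ_iff by auto
qed

lemma coh_equiv: "equiv (cocycles n N) (cohomologous n N)"
proof (rule equivI)
  show "cohomologous n N \<subseteq> cocycles n N \<times> cocycles n N" unfolding cohomologous_def by auto
  show "refl_on (cocycles n N) (cohomologous n N)"
  proof (rule refl_onI)
    fix x assume x: "x \<in> cocycles n N"
    hence xc: "x \<in> carrier_mat (2*n) (2*n)" unfolding cocycles_def using Gamma_princ_carrier by auto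
    have "x = tau n (1\<^sub>m (2*n)) * x * 1\<^sub>m (2*n)" using xc tau_one by simp
    thus "(x, x) \<in> cohomologous n N" unfolding cohomologous_def using x one_Gamma_princ
      by (intro CollectI case_prodI conjI exI[of _ "1\<^sub>m (2*n)"]) auto
  qed
  show "sym (cohomologous n N)"
  proof (rule symI)
    fix x y assume "(x, y) \<in> cohomologous n N"
    then obtain h h' where x: "x \<in> cocycles n N" and y: "y \<in> cocycles n N" and h: "h \<in> Gamma_princ n N"
      and h'c: "h' \<in> carrier_mat (2*n) (2*n)" and hh': "h * h' = 1\<^sub>m (2*n)" and h'h: "h' * h = 1\<^sub>m (2*n)"
      and yeq: "y = tau n h * x * h'" unfolding cohomologous_def by blast
    have hc: "h \<in> carrier_mat (2*n) (2*n)" using h Gamma_princ_carrier by auto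
    have xc: "x \<in> carrier_mat (2*n) (2*n)" using x unfolding cocycles_def using Gamma_princ_carrier by auto
    have h': "h' \<in> Gamma_princ n N" by (rule Gamma_princ_inv[OF h h'c hh' h'h])
    have "tau n h' * y * h = (tau n h' * tau n h) * x * (h' * h)" unfolding yeq
      using hc h'c xc by (simp add: sq_assoc[where k="2*n"])
    also have "tau n h' * tau n h = 1\<^sub>m (2*n)" using tau_mult[OF h'c hc, symmetric] h'h tau_one by simp
    also have "1\<^sub>m (2*n) * x * (h' * h) = x" using h'h xc by simp
    finally have "x = tau n h' * y * h" by simp
    thus "(y, x) \<in> cohomologous n N" unfolding cohomologous_def using x y h' hc hh' h'h
      by (intro CollectI case_prodI conjI exI[of _ h'] exI[of _ h]) auto
  qed
  show "trans (cohomologous n N)"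
  proof (rule transI)
    fix x y z assume "(x, y) \<in> cohomologous n N" "(y, z) \<in> cohomologous n N"
    then obtain h h' k k' where x: "x \<in> cocycles n N" and z: "z \<in> cocycles n N" and h: "h \<in> Gamma_princ n N"
      and h'c: "h' \<in> carrier_mat (2*n) (2*n)" and hh': "h * h' = 1\<^sub>m (2*n)" and h'h: "h' * h = 1\<^sub>m (2*n)"
      and yeq: "y = tau n h * x * h'"
      and k: "k \<in> Gamma_princ n N"
      and k'c: "k' \<in> carrier_mat (2*n) (2*n)" and kk': "k * k' = 1\<^sub>m (2*n)" and k'k: "k' * k = 1\<^sub>m (2*n)"
      and zeq: "z = tau n k * y * k'" unfolding cohomologous_def by blast
    have hc: "h \<in> carrier_mat (2*n) (2*n)" using h Gamma_princ_carrier by auto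
    have kc: "k \<in> carrier_mat (2*n) (2*n)" using k Gamma_princ_carrier by auto
    have xc: "x \<in> carrier_mat (2*n) (2*n)" using x unfolding cocycles_def using Gamma_princ_carrier by auto
    have "z = (tau n k * tau n h) * x * (h' * k')" unfolding zeq yeq
      using hc h'c xc kc k'c by (simp add: sq_assoc[where k="2*n"])
    hence z2: "z = tau n (k * h) * x * (h' * k')" using tau_mult[OF kc hc] by simp
    have "(k * h) * (h' * k') = k * (h * h') * k'" using hc h'c kc k'c by (simp add: sq_assoc[where k="2*n"])
    hence e1: "(k * h) * (h' * k') = 1\<^sub>m (2*n)" using hh' kk' kc by simp
    have "(h' * k') * (k * h) = h' * (k' * k) * h" using hc h'c kc k'c by (simp add: sq_assoc[where k="2*n"])
    hence e2: "(h' * k') * (k * h) = 1\<^sub>m (2*n)" using h'h k'k h'c by simp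
    show "(x, z) \<in> cohomologous n N" unfolding cohomologous_def using x z Gamma_princ_mult[OF k h] e1 e2 z2 h'c k'c
      by (intro CollectI case_prodI conjI exI[of _ "k * h"] exI[of _ "h' * k'"]) auto
  qed
qed

lemma gam_wd: assumes m: "m \<ge> 1" and g0: "g0 \<in> Gamma_2m_2 n m" and g: "g \<in> Gamma_2m_2 n m"
  and gd: "g \<in> dcoset n (4*m) g0"
  shows "(gam n g0, gam n g) \<in> cohomologous n (4*m)"
proof -
  obtain a u where geq: "g = a * g0 * u" and a: "a \<in> Gamma_princ n (4*m)" and u: "u \<in> Gamma_l_2 n"
    using gd unfolding dcoset_def by blast
  have g0S: "g0 \<in> Sp n" and gS: "g \<in> Sp n" using G_Sp[OF m] g0 g by auto
  have g0c: "g0 \<in> carrier_mat (2*n) (2*n)" using g0S Sp_carrier by auto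
  have ac: "a \<in> carrier_mat (2*n) (2*n)" and uc: "u \<in> carrier_mat (2*n) (2*n)"
    using a u Gamma_princ_carrier Gamma_l_2_carrier by auto
  have aS: "a \<in> Sp n" using a Gamma_princ_iff by auto
  have tu: "tau n u = u" using u Gamma_l_2_iff by auto
  note IA = int_mat_inv_Sp[OF aS]
  note G0 = gam_props[OF g0S]
  let ?X = "tau n a * gam n g0 * int_mat_inv a"
  have Xc: "?X \<in> carrier_mat (2*n) (2*n)" using ac G0 IA by auto
  have "?X * g = tau n a * (gam n g0 * ((int_mat_inv a * a) * g0 * u))"
    unfolding geq using ac G0(1) IA(1) g0c uc by (simp add: sq_assoc[where k="2*n"])
  also have "\<dots> = tau n a * ((gam n g0 * g0) * u)" using IA g0c uc G0(1) by (simp add: sq_assoc[where k="2*n"])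
  also have "\<dots> = tau n a * tau n g0 * tau n u" using G0 tu ac g0c uc by (simp add: sq_assoc[where k="2*n"])
  also have "\<dots> = tau n g" unfolding geq using tau_mult ac g0c uc by (simp add: tau_mult sq_assoc[where k="2*n"])
  finally have "?X = gam n g" by (rule gam_unique[OF gS Xc])
  thus ?thesis unfolding cohomologous_def using gam_cocycle[OF m g0] gam_cocycle[OF m g] a IA
    by (intro CollectI case_prodI conjI exI[of _ a] exI[of _ "int_mat_inv a"]) auto
qed

lemma gam_inj: assumes m: "m \<ge> 1" and g1: "g1 \<in> Gamma_2m_2 n m" and g2: "g2 \<in> Gamma_2m_2 n m"
  and R: "(gam n g1, gam n g2) \<in> cohomologous n (4*m)"
  shows "g2 \<in> dcoset n (4*m) g1"
proof -
  obtain h h' where h: "h \<in> Gamma_princ n (4*m)"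
      and h'c: "h' \<in> carrier_mat (2*n) (2*n)" and hh': "h * h' = 1\<^sub>m (2*n)" and h'h: "h' * h = 1\<^sub>m (2*n)"
      and yeq: "gam n g2 = tau n h * gam n g1 * h'" using R unfolding cohomologous_def by blast
  have g1S: "g1 \<in> Sp n" and g2S: "g2 \<in> Sp n" using G_Sp[OF m] g1 g2 by auto
  have g1c: "g1 \<in> carrier_mat (2*n) (2*n)" and g2c: "g2 \<in> carrier_mat (2*n) (2*n)" using g1S g2S Sp_carrier by auto
  have hc: "h \<in> carrier_mat (2*n) (2*n)" using h Gamma_princ_carrier by auto
  have h'G: "h' \<in> Gamma_princ n (4*m)" by (rule Gamma_princ_inv[OF h h'c hh' h'h])
  have hS: "h \<in> Sp n" and h'S: "h' \<in> Sp n" using h h'G Gamma_princ_iff by auto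
  note I1 = int_mat_inv_Sp[OF g1S]
  note G1 = gam_props[OF g1S] and G2 = gam_props[OF g2S]
  define u where "u = int_mat_inv g1 * h' * g2"
  have uc: "u \<in> carrier_mat (2*n) (2*n)" unfolding u_def using I1 h'c g2c by auto
  have uS: "u \<in> Sp n" unfolding u_def by (rule Sp_mult[OF Sp_mult[OF I1(4) h'S] g2S])
  have m2: "mcong 2 g1 (1\<^sub>m (2*n))" "mcong 2 g2 (1\<^sub>m (2*n))" using g1 g2 Gamma_2m_2_iff[OF m] by auto
  have mi: "mcong 2 (int_mat_inv g1) (1\<^sub>m (2*n))"
    by (rule mcong_inverse[OF g1c I1(1) I1(3) _ _ _ m2(1)]) auto
  have "mcong (4*m) h' (1\<^sub>m (2*n))" using h'G Gamma_princ_iff by auto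
  hence mh: "mcong 2 h' (1\<^sub>m (2*n))" by (rule mcong_dvd[rotated]) simp
  have "mcong 2 (int_mat_inv g1 * h' * g2) (1\<^sub>m (2*n) * 1\<^sub>m (2*n) * 1\<^sub>m (2*n))"
    by (intro mcong_mult mi mh m2) (use I1 h'c g2c in auto)
  hence um: "mcong 2 u (1\<^sub>m (2*n))" unfolding u_def by simp
  have t2: "tau n g2 = tau n (h * g1) * u"
  proof -
    have "tau n g2 = tau n h * gam n g1 * h' * g2" using G2(2) yeq by simp
    also have "\<dots> = tau n h * (gam n g1 * g1) * (int_mat_inv g1 * h' * g2)"
    proof -
      have "tau n h * (gam n g1 * g1) * (int_mat_inv g1 * h' * g2) = tau n h * gam n g1 * (g1 * int_mat_inv g1) * h' * g2"
        using hc G1(1) g1c I1(1) h'c g2c by (simp add: sq_assoc[where k="2*n"])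
      also have "\<dots> = tau n h * gam n g1 * h' * g2" using I1(2) hc G1(1) by simp
      finally show ?thesis by simp
    qed
    also have "\<dots> = tau n (h * g1) * u" unfolding u_def using G1(2) tau_mult[OF hc g1c] by simp
    finally show ?thesis .
  qed
  have "tau n u = u"
  proof -
    have "tau n u = tau n (int_mat_inv g1) * tau n h' * tau n g2" unfolding u_def
      using tau_mult I1(1) h'c g2c by (simp add: tau_mult sq_assoc[where k="2*n"])
    also have "\<dots> = tau n (int_mat_inv g1) * tau n h' * tau n h * tau n g1 * u"
      unfolding t2 using tau_mult[OF hc g1c] hc g1c I1(1) h'c uc by (simp add: sq_assoc[where k="2*n"])
    also have "\<dots> = tau n (int_mat_inv g1 * (h' * h) * g1) * u"
      using I1(1) h'c hc g1c by (simp add: tau_mult sq_assoc[where k="2*n"])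
    also have "\<dots> = u" using h'h I1(3) tau_one uc I1(1) by simp
    finally show ?thesis .
  qed
  hence uG: "u \<in> Gamma_l_2 n" using uS um Gamma_l_2_iff by auto
  have "h * g1 * u = h * (g1 * int_mat_inv g1) * h' * g2" unfolding u_def
    using hc g1c I1(1) h'c g2c by (simp add: sq_assoc[where k="2*n"])
  also have "\<dots> = g2" using I1(2) hh' hc g2c by simp
  finally show ?thesis unfolding dcoset_def using h uG by blast
qed



lemma mult_vec_carrier_sq[simp]: "A \<in> carrier_mat k k \<Longrightarrow> v \<in> carrier_vec k \<Longrightarrow> A *\<^sub>v v \<in> carrier_vec k"
  by (rule mult_mat_vec_carrier)

lemma pow2_dvd_zero: assumes "\<forall>t. (2::int)^t dvd x" shows "x = 0"
proof (rule ccontr)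
  assume x: "x \<noteq> 0"
  have "(2::int)^(nat \<bar>x\<bar>) dvd x" using assms by blast
  hence "\<bar>(2::int)^(nat \<bar>x\<bar>)\<bar> \<le> \<bar>x\<bar>" using x by (rule dvd_imp_le_int[rotated])
  moreover have "int (nat \<bar>x\<bar>) < 2 ^ (nat \<bar>x\<bar>)"
    using less_exp[of "nat \<bar>x\<bar>"] by (metis of_nat_less_iff of_nat_numeral of_nat_power)
  ultimately show False by simp
qed

lemma descent:
  assumes step: "\<And>f. P f \<Longrightarrow> (\<forall>i<k. even (f i)) \<and> P (\<lambda>i. f i div 2)" and Pf: "P f"
  shows "\<forall>i<k. f i = (0::int)"
proof -
  have "\<forall>f. P f \<longrightarrow> (\<forall>i<k. (2::int)^t dvd f i)" for t
  proof (induction t)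
    case 0 show ?case by simp
  next
    case (Suc t)
    show ?case
    proof (intro allI impI)
      fix f i assume Pf: "P f" and i: "i < k"
      from step[OF Pf] have ev: "even (f i)" and P2: "P (\<lambda>i. f i div 2)" using i by auto
      from Suc[rule_format, OF P2 i] have "2^t dvd f i div 2" by simp
      hence "2 * 2^t dvd 2 * (f i div 2)" by simp
      thus "2^Suc t dvd f i" using ev by simp
    qed
  qed
  thus ?thesis using Pf pow2_dvd_zero by blast
qed

lemma indep:
  assumes par: "\<forall>j<(k::nat). \<forall>i. [b j i = (if i = j then 1 else 0)] (mod 2)"
    and z: "\<forall>i<k. (\<Sum>j<k. y j * b j i) = (0::int)"
  shows "\<forall>j<k. y j = 0"
proof -
  let ?P = "\<lambda>y. \<forall>i<k. (\<Sum>j<k. y j * b j i) = (0::int)"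
  have "\<forall>j<k. y j = 0"
  proof (rule descent[of ?P k y])
    fix y assume Py: "?P y"
    have ev: "\<forall>i<k. even (y i)"
    proof (intro allI impI)
      fix i assume i: "i < k"
      have "[(\<Sum>j<k. y j * b j i) = (\<Sum>j<k. y j * (if i = j then 1 else 0))] (mod 2)"
        using par by (intro cong_sum cong_mult cong_refl) auto
      also have "(\<Sum>j<k. y j * (if i = j then 1 else 0)) = y i" using i
        by (simp add: if_distrib[of "\<lambda>x. _ * x"] sum.delta' cong: if_cong)
      finally have "[0 = y i] (mod 2)" using Py i by simp
      thus "even (y i)" by (metis cong_0_iff cong_sym)
    qed
    moreover have "?P (\<lambda>j. y j div 2)"
    proof (intro allI impI)
      fix i assume i: "i < k"
      have "(\<Sum>j<k. y j * b j i) = 2 * (\<Sum>j<k. (y j div 2) * b j i)"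
        unfolding sum_distrib_left using ev by (intro sum.cong) auto
      thus "(\<Sum>j<k. (y j div 2) * b j i) = 0" using Py i by simp
    qed
    ultimately show "(\<forall>i<k. even (y i)) \<and> ?P (\<lambda>j. y j div 2)" by blast
  qed (use z in auto)
  thus ?thesis .
qed

lemma cong_sub_even: "even (s::int) \<Longrightarrow> [a - s * c = a] (mod 2)"
  unfolding cong_iff_dvd_diff by simp

lemma lattice_basis:
  fixes L :: "(nat \<Rightarrow> int) set" and k :: nat
  assumes "\<forall>v\<in>L. \<forall>i\<ge>k. v i = 0" "\<forall>u\<in>L. \<forall>v\<in>L. (\<lambda>i. u i - v i) \<in> L" "\<forall>v\<in>L. \<forall>c. (\<lambda>i. c * v i) \<in> L"
    "\<forall>i<k. \<exists>v\<in>L. \<forall>j. [v j = (if j = i then 1 else 0)] (mod 2)"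
  shows "\<exists>b. (\<forall>j<k. b j \<in> L) \<and> (\<forall>j<k. \<forall>i. [b j i = (if i = j then 1 else 0)] (mod 2)) \<and>
     (\<forall>u\<in>L. \<exists>y. \<forall>i. u i = (\<Sum>j<k. y j * b j i))"
  using assms
proof (induction k arbitrary: L)
  case 0
  show ?case using "0.prems"(1) by auto
next
  case (Suc k)
  have supp: "\<forall>v\<in>L. \<forall>i\<ge>Suc k. v i = 0" and diff: "\<forall>u\<in>L. \<forall>v\<in>L. (\<lambda>i. u i - v i) \<in> L"
    and smul: "\<forall>v\<in>L. \<forall>c. (\<lambda>i. c * v i) \<in> L"
    and par: "\<forall>i<Suc k. \<exists>v\<in>L. \<forall>j. [v j = (if j = i then 1 else 0)] (mod 2)" using Suc.prems by auto
  have lin: "(\<lambda>i. u i - c * v i) \<in> L" if "u \<in> L" "v \<in> L" for u v c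
    using diff smul that by auto
  obtain v0 where v0: "v0 \<in> L" "\<forall>j. [v0 j = (if j = k then 1 else 0)] (mod 2)" using par by auto
  have "[v0 k = 1] (mod 2)" using v0(2)[rule_format, of k] by simp
  hence "2 dvd v0 k - 1" unfolding cong_iff_dvd_diff .
  hence v0odd: "odd (v0 k)" by presburger
  define S where "S = {d::nat. d > 0 \<and> (\<exists>v\<in>L. v k = int d)}"
  have inS: "nat \<bar>v0 k\<bar> \<in> S"
  proof (cases "v0 k > 0")
    case True thus ?thesis unfolding S_def using v0(1) by auto
  next
    case False
    hence "v0 k < 0" using v0odd by (cases "v0 k = 0") auto
    moreover have "(\<lambda>i. (-1) * v0 i) \<in> L" using smul v0(1) by blast
    ultimately show ?thesis unfolding S_def by (intro CollectI conjI bexI[of _ "\<lambda>i. (-1) * v0 i"]) auto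
  qed
  define d where "d = (LEAST d. d \<in> S)"
  have dS: "d \<in> S" unfolding d_def by (rule LeastI[of "\<lambda>d. d \<in> S", OF inS])
  then obtain w where w: "w \<in> L" "w k = int d" and dpos: "d > 0" unfolding S_def by auto
  have dvd_all: "int d dvd u k" if u: "u \<in> L" for u
  proof -
    define r where "r = u k mod int d"
    have "(\<lambda>i. u i - (u k div int d) * w i) \<in> L" by (rule lin[OF u w(1)])
    moreover have "u k - (u k div int d) * w k = r" unfolding r_def w(2) by (simp add: minus_div_mult_eq_mod)
    ultimately have rL: "\<exists>v\<in>L. v k = r" by force
    have r0: "0 \<le> r" "r < int d" unfolding r_def using dpos by auto
    have "r = 0"
    proof (rule ccontr)
      assume "r \<noteq> 0"
      hence "nat r \<in> S" unfolding S_def using rL r0 by auto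
      hence "d \<le> nat r" unfolding d_def by (rule Least_le)
      thus False using r0 by auto
    qed
    thus ?thesis unfolding r_def by auto
  qed
  have dodd: "odd (int d)" using dvd_all[OF v0(1)] v0odd by (metis dvd_trans)
  obtain t where t: "v0 k = int d * t" using dvd_all[OF v0(1)] by (auto elim: dvdE)
  have todd: "odd t" using v0odd t by auto
  define w' where "w' = (\<lambda>i. v0 i - (t - 1) * w i)"
  have w'L: "w' \<in> L" unfolding w'_def by (rule lin[OF v0(1) w(1)])
  have w'k: "w' k = int d" unfolding w'_def using t w(2) by (simp add: algebra_simps)
  have w'par: "\<forall>j. [w' j = (if j = k then 1 else 0)] (mod 2)"
  proof
    fix j
    have "[w' j = v0 j] (mod 2)" unfolding w'_def by (rule cong_sub_even) (use todd in auto)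
    thus "[w' j = (if j = k then 1 else 0)] (mod 2)" using v0(2) by (metis cong_trans)
  qed
  define L' where "L' = {v \<in> L. v k = 0}"
  have "\<exists>b. (\<forall>j<k. b j \<in> L') \<and> (\<forall>j<k. \<forall>i. [b j i = (if i = j then 1 else 0)] (mod 2)) \<and>
     (\<forall>u\<in>L'. \<exists>y. \<forall>i. u i = (\<Sum>j<k. y j * b j i))"
  proof (rule Suc.IH)
    show "\<forall>v\<in>L'. \<forall>i\<ge>k. v i = 0"
    proof (intro ballI allI impI)
      fix v i assume v: "v \<in> L'" and i: "k \<le> i"
      show "v i = 0" using v i supp unfolding L'_def by (cases "i = k") auto
    qed
    show "\<forall>u\<in>L'. \<forall>v\<in>L'. (\<lambda>i. u i - v i) \<in> L'" using diff unfolding L'_def by auto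
    show "\<forall>v\<in>L'. \<forall>c. (\<lambda>i. c * v i) \<in> L'" using smul unfolding L'_def by auto
    show "\<forall>i<k. \<exists>v\<in>L'. \<forall>j. [v j = (if j = i then 1 else 0)] (mod 2)"
    proof (intro allI impI)
      fix i assume i: "i < k"
      obtain v where v: "v \<in> L" "\<forall>j. [v j = (if j = i then 1 else 0)] (mod 2)" using par[rule_format, of i] i by auto
      obtain s where s: "v k = int d * s" using dvd_all[OF v(1)] by (auto elim: dvdE)
      have "[v k = 0] (mod 2)" using v(2)[rule_format, of k] i by simp
      hence "even (v k)" by (simp add: cong_0_iff)
      hence seven: "even s" using s dodd by auto
      define v' where "v' = (\<lambda>j. v j - s * w' j)"
      have "v' \<in> L'" unfolding L'_def v'_def using lin[OF v(1) w'L] s w'k by auto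
      moreover have "\<forall>j. [v' j = (if j = i then 1 else 0)] (mod 2)"
      proof
        fix j
        have "[v' j = v j] (mod 2)" unfolding v'_def by (rule cong_sub_even[OF seven])
        thus "[v' j = (if j = i then 1 else 0)] (mod 2)" using v(2) by (metis cong_trans)
      qed
      ultimately show "\<exists>v\<in>L'. \<forall>j. [v j = (if j = i then 1 else 0)] (mod 2)" by blast
    qed
  qed
  then obtain b' where b'L: "\<forall>j<k. b' j \<in> L'" and b'par: "\<forall>j<k. \<forall>i. [b' j i = (if i = j then 1 else 0)] (mod 2)"
    and b'span: "\<forall>u\<in>L'. \<exists>y. \<forall>i. u i = (\<Sum>j<k. y j * b' j i)" by blast
  define b where "b = (\<lambda>j. if j = k then w' else b' j)"
  show ?case
  proof (intro exI[of _ b] conjI)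
    show "\<forall>j<Suc k. b j \<in> L" using b'L w'L unfolding b_def L'_def by (auto simp: less_Suc_eq)
    show "\<forall>j<Suc k. \<forall>i. [b j i = (if i = j then 1 else 0)] (mod 2)"
      using b'par w'par unfolding b_def by (auto simp: less_Suc_eq)
    show "\<forall>u\<in>L. \<exists>y. \<forall>i. u i = (\<Sum>j<Suc k. y j * b j i)"
    proof
      fix u assume u: "u \<in> L"
      obtain s where s: "u k = int d * s" using dvd_all[OF u] by (auto elim: dvdE)
      define u' where "u' = (\<lambda>i. u i - s * w' i)"
      have "u' \<in> L'" unfolding L'_def u'_def using lin[OF u w'L] s w'k by auto
      then obtain y' where y': "\<forall>i. u' i = (\<Sum>j<k. y' j * b' j i)" using b'span by blast
      show "\<exists>y. \<forall>i. u i = (\<Sum>j<Suc k. y j * b j i)"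
      proof (intro exI[of _ "y'(k := s)"] allI)
        fix i
        have "(\<Sum>j<Suc k. (y'(k := s)) j * b j i) = (\<Sum>j<k. y' j * b' j i) + s * w' i"
          unfolding b_def by (simp add: lessThan_Suc)
        also have "\<dots> = u i" using y'[rule_format, of i] unfolding u'_def by simp
        finally show "u i = (\<Sum>j<Suc k. (y'(k := s)) j * b j i)" by simp
      qed
    qed
  qed
qed

lemma half_cong: assumes "[x = 2 * e] (mod 4)" shows "x = 2 * (x div 2)" "[x div 2 = e] (mod (2::int))"
proof -
  from assms have d: "4 dvd x - 2 * e" unfolding cong_iff_dvd_diff .
  hence "even x" by presburger
  thus x: "x = 2 * (x div 2)" by simp
  have "4 dvd 2 * (x div 2) - 2 * e" using d x by simp
  hence "2 dvd x div 2 - e" by presburger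
  thus "[x div 2 = e] (mod 2)" unfolding cong_iff_dvd_diff .
qed

lemma smult2_cancel: assumes "A \<in> carrier_mat a b" "B \<in> carrier_mat a b" "(2::int) \<cdot>\<^sub>m A = 2 \<cdot>\<^sub>m B"
  shows "A = B"
proof (rule eq_matI)
  fix i j assume ij: "i < dim_row B" "j < dim_col B"
  have "(2 \<cdot>\<^sub>m A) $$ (i,j) = (2 \<cdot>\<^sub>m B) $$ (i,j)" by (simp only: assms(3))
  thus "A $$ (i,j) = B $$ (i,j)" using ij assms(1,2) by simp
qed (use assms in auto)

lemma smult2_cancel_vec: assumes "x \<in> carrier_vec a" "y \<in> carrier_vec a" "(2::int) \<cdot>\<^sub>v x = 2 \<cdot>\<^sub>v y"
  shows "x = y"
proof (rule eq_vecI)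
  fix i assume i: "i < dim_vec y"
  have "(2 \<cdot>\<^sub>v x) $ i = (2 \<cdot>\<^sub>v y) $ i" by (simp only: assms(3))
  thus "x $ i = y $ i" using i assms(1,2) by simp
qed (use assms in auto)

lemma smult_mat_mult_vec: assumes "A \<in> carrier_mat a b" "x \<in> carrier_vec b"
  shows "(k \<cdot>\<^sub>m A) *\<^sub>v x = (k::int) \<cdot>\<^sub>v (A *\<^sub>v x)"
  by (rule eq_vecI) (use assms in auto)

lemma mat_mult_smult_vec: assumes "A \<in> carrier_mat a b" "x \<in> carrier_vec b"
  shows "A *\<^sub>v (k \<cdot>\<^sub>v x) = (k::int) \<cdot>\<^sub>v (A *\<^sub>v x)"
  by (rule eq_vecI) (use assms in auto)

lemma mcong_mult_vec: assumes "mcong N A B" "x \<in> carrier_vec (dim_col A)" "i < dim_row A"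
  shows "[(A *\<^sub>v x) $ i = (B *\<^sub>v x) $ i] (mod N)"
proof -
  have "(A *\<^sub>v x) $ i = (\<Sum>k = 0..<dim_col A. A $$ (i,k) * x $ k)" using assms by (auto simp: scalar_prod_def)
  moreover have "(B *\<^sub>v x) $ i = (\<Sum>k = 0..<dim_col A. B $$ (i,k) * x $ k)"
    using assms unfolding mcong_def by (auto simp: scalar_prod_def)
  moreover have "[(\<Sum>k = 0..<dim_col A. A $$ (i,k) * x $ k) = (\<Sum>k = 0..<dim_col A. B $$ (i,k) * x $ k)] (mod N)"
    using assms unfolding mcong_def by (intro cong_sum cong_mult) auto
  ultimately show ?thesis by simp
qed

definition om :: "nat \<Rightarrow> int vec \<Rightarrow> int vec \<Rightarrow> int" where "om n x y = x \<bullet> (Jmat n *\<^sub>v y)"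
definition topv :: "nat \<Rightarrow> int vec \<Rightarrow> nat \<Rightarrow> int" where "topv n x = (\<lambda>i. if i < n then x $ i else 0)"

lemma mat_vec_uminus: assumes "A \<in> carrier_mat a b" "x \<in> carrier_vec b"
  shows "A *\<^sub>v (- x) = - (A *\<^sub>v (x :: int vec))"
  by (rule eq_vecI) (use assms in auto)

lemma om_anti: assumes x: "x \<in> carrier_vec (2*n)" and y: "y \<in> carrier_vec (2*n)"
  shows "om n y x = - om n x y"
proof -
  have "om n y x = (transpose_mat (Jmat n) *\<^sub>v y) \<bullet> x" unfolding om_def
    by (rule transpose_vec_mult_scalar[symmetric, OF Jmat_carrier x y])
  also have "\<dots> = - ((Jmat n *\<^sub>v y) \<bullet> x)" unfolding J_transpose using x y by simp
  also have "(Jmat n *\<^sub>v y) \<bullet> x = x \<bullet> (Jmat n *\<^sub>v y)" using x y by (intro comm_scalar_prod[of _ "2*n"]) auto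
  finally show ?thesis unfolding om_def by simp
qed

context
  fixes n :: nat and m :: int and \<gamma> :: "int mat"
  assumes m1: "m \<ge> 1" and gcoc: "\<gamma> \<in> cocycles n (4*m)"
begin

lemma gS: "\<gamma> \<in> Sp n" and gmod: "mcong (4*m) \<gamma> (1\<^sub>m (2*n))" and gt: "\<gamma> * tau n \<gamma> = 1\<^sub>m (2*n)"
  using gcoc unfolding cocycles_def Gamma_princ_iff by auto

lemma gcar: "\<gamma> \<in> carrier_mat (2*n) (2*n)" using gS Sp_carrier by auto

definition "MM = sig n * \<gamma>"

lemma MM_carrier[simp]: "MM \<in> carrier_mat (2*n) (2*n)" unfolding MM_def using gcar by simp

lemma MM_dims[simp]: "dim_row MM = 2*n" "dim_col MM = 2*n" using carrier_matD[OF MM_carrier] by auto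

lemma tg: "tau n \<gamma> * \<gamma> = 1\<^sub>m (2*n)"
  by (rule int_left_right_inverse[OF gcar _ gt]) (use gcar in simp)

lemma MM_MM: "MM * MM = 1\<^sub>m (2*n)"
proof -
  have "MM * MM = (sig n * \<gamma> * sig n) * \<gamma>" unfolding MM_def using gcar by (simp add: sq_assoc[where k="2*n"])
  also have "\<dots> = 1\<^sub>m (2*n)" using tg tau_sig[OF gcar] by simp
  finally show ?thesis .
qed

lemma MJM: "transpose_mat MM * Jmat n * MM = - Jmat n"
proof -
  have "transpose_mat MM = transpose_mat \<gamma> * sig n" unfolding MM_def using gcar
    by (simp add: transpose_mult[where n="2*n" and nr="2*n" and nc="2*n"] sig_transpose)
  hence "transpose_mat MM * Jmat n * MM = transpose_mat \<gamma> * (sig n * (Jmat n * (sig n * \<gamma>)))"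
    unfolding MM_def using gcar by (simp add: sq_assoc[where k="2*n"])
  also have "\<dots> = - (transpose_mat \<gamma> * Jmat n * \<gamma>)" using gcar by (simp add: sig_J_sig' sq_assoc[where k="2*n"])
  also have "\<dots> = - Jmat n" using gS unfolding Sp_def by simp
  finally show ?thesis .
qed

lemma M_cong4: "mcong 4 MM (sig n)"
proof -
  have "mcong (4*m) (sig n * \<gamma>) (sig n * 1\<^sub>m (2*n))" by (rule mcong_mult[OF mcong_refl gmod]) (use gcar in simp)
  hence "mcong (4*m) MM (sig n)" unfolding MM_def by simp
  thus ?thesis by (rule mcong_dvd[rotated]) simp
qed

definition "Pm = mat (2*n) (2*n) (\<lambda>(i,j). ((1\<^sub>m (2*n) + MM) $$ (i,j)) div 2)"
definition "E1 = mat (2*n) (2*n) (\<lambda>(i,j). if i = j \<and> i < n then 1 else (0::int))"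

lemma Pm_carrier[simp]: "Pm \<in> carrier_mat (2*n) (2*n)" unfolding Pm_def by simp
lemma Pm_dims[simp]: "dim_row Pm = 2*n" "dim_col Pm = 2*n" unfolding Pm_def by simp_all

lemma entry4: assumes "i < 2*n" "j < 2*n"
  shows "[(1\<^sub>m (2*n) + MM) $$ (i,j) = 2 * E1 $$ (i,j)] (mod 4)"
proof -
  have "[MM $$ (i,j) = sig n $$ (i,j)] (mod 4)" using M_cong4 assms unfolding mcong_def by auto
  hence "[(1\<^sub>m (2*n) :: int mat) $$ (i,j) + MM $$ (i,j) = (1\<^sub>m (2*n) :: int mat) $$ (i,j) + sig n $$ (i,j)] (mod 4)"
    by (rule cong_add_lcancel[THEN iffD2])
  moreover have "(1\<^sub>m (2*n) :: int mat) $$ (i,j) + sig n $$ (i,j) = 2 * E1 $$ (i,j)"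
    using assms unfolding sig_def E1_def by auto
  ultimately show ?thesis using assms by simp
qed

lemma Pm2: "2 \<cdot>\<^sub>m Pm = 1\<^sub>m (2*n) + MM"
proof (rule eq_matI)
  fix i j assume "i < dim_row (1\<^sub>m (2*n) + MM)" "j < dim_col (1\<^sub>m (2*n) + MM)"
  hence ij: "i < 2*n" "j < 2*n" by auto
  show "(2 \<cdot>\<^sub>m Pm) $$ (i,j) = (1\<^sub>m (2*n) + MM) $$ (i,j)"
    using half_cong(1)[OF entry4[OF ij]] ij unfolding Pm_def by simp
qed auto

lemma Pm_E1: "mcong 2 Pm E1"
  unfolding mcong_def
proof (intro conjI allI impI)
  fix i j assume "i < dim_row Pm" "j < dim_col Pm"
  hence ij: "i < 2*n" "j < 2*n" by auto
  show "[Pm $$ (i,j) = E1 $$ (i,j)] (mod 2)"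
    using half_cong(2)[OF entry4[OF ij]] ij unfolding Pm_def by simp
qed (auto simp: E1_def)

lemma M_Pm: "MM * Pm = Pm"
proof (rule smult2_cancel[of _ "2*n" "2*n"])
  have "2 \<cdot>\<^sub>m (MM * Pm) = MM * (2 \<cdot>\<^sub>m Pm)" by (rule mult_smult_distrib[symmetric]) auto
  also have "\<dots> = MM * 1\<^sub>m (2*n) + MM * MM" unfolding Pm2 by (subst mult_add_distrib_mat[where n="2*n" and nc="2*n" and nr="2*n"]) auto
  also have "\<dots> = 2 \<cdot>\<^sub>m Pm" unfolding Pm2 MM_MM by (simp add: comm_add_mat[of _ "2*n" "2*n"])
  finally show "2 \<cdot>\<^sub>m (MM * Pm) = 2 \<cdot>\<^sub>m Pm" .
qed auto

lemma Pm_vec: assumes x: "x \<in> carrier_vec (2*n)"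
  shows "2 \<cdot>\<^sub>v (Pm *\<^sub>v x) = x + MM *\<^sub>v x"
proof -
  have "2 \<cdot>\<^sub>v (Pm *\<^sub>v x) = (2 \<cdot>\<^sub>m Pm) *\<^sub>v x" using x by (simp add: smult_mat_mult_vec[of _ "2*n" "2*n"])
  also have "\<dots> = x + MM *\<^sub>v x" unfolding Pm2 using x by (simp add: add_mult_distrib_mat_vec[of _ "2*n" "2*n"])
  finally show ?thesis .
qed

definition "Lp = {x \<in> carrier_vec (2*n). MM *\<^sub>v x = x}"
definition "Lm = {x \<in> carrier_vec (2*n). MM *\<^sub>v x = - x}"

lemma Lp_diff: "x \<in> Lp \<Longrightarrow> y \<in> Lp \<Longrightarrow> x - y \<in> Lp"
  unfolding Lp_def by (auto simp: mult_minus_distrib_mat_vec[of _ "2*n" "2*n"])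

lemma Lp_smult: "x \<in> Lp \<Longrightarrow> c \<cdot>\<^sub>v x \<in> Lp"
  unfolding Lp_def by (auto simp: mat_mult_smult_vec[of _ "2*n" "2*n"])

lemma Pm_Lp: assumes x: "x \<in> carrier_vec (2*n)" shows "Pm *\<^sub>v x \<in> Lp"
proof -
  have "MM *\<^sub>v (Pm *\<^sub>v x) = (MM * Pm) *\<^sub>v x" by (rule assoc_mult_mat_vec[symmetric]) (use x in auto)
  thus ?thesis unfolding Lp_def M_Pm using x by simp
qed

lemma Pm_fix: assumes x: "x \<in> Lp" shows "Pm *\<^sub>v x = x"
proof (rule smult2_cancel_vec[of _ "2*n"])
  have xc: "x \<in> carrier_vec (2*n)" and Mx: "MM *\<^sub>v x = x" using x unfolding Lp_def by auto
  show "2 \<cdot>\<^sub>v (Pm *\<^sub>v x) = 2 \<cdot>\<^sub>v x" unfolding Pm_vec[OF xc] Mx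
    by (rule eq_vecI) (use xc in auto)
qed (use x in \<open>auto simp: Lp_def\<close>)

lemma E1_vec: assumes x: "x \<in> carrier_vec (2*n)" and i: "i < 2*n"
  shows "(E1 *\<^sub>v x) $ i = topv n x i"
proof -
  have "(E1 *\<^sub>v x) $ i = (\<Sum>k = 0..<2*n. (if i = k then (if i < n then 1 else 0) else 0) * x $ k)"
    using x i unfolding E1_def by (auto simp: scalar_prod_def intro!: sum.cong)
  also have "\<dots> = (if i < n then 1 else 0) * x $ i" by (rule sum_delta_int[OF i])
  finally show ?thesis unfolding topv_def by simp
qed

lemma top_inj: assumes x: "x \<in> Lp" and t: "\<forall>i<n. x $ i = 0" shows "\<forall>i<2*n. x $ i = 0"
proof -
  let ?P = "\<lambda>f. \<exists>x\<in>Lp. (\<forall>i<n. x $ i = 0) \<and> (\<forall>i<2*n. f i = x $ i)"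
  have "\<forall>i<2*n. (\<lambda>i. x $ i) i = 0"
  proof (rule descent[of ?P])
    fix f assume "?P f"
    then obtain x where x: "x \<in> Lp" and t: "\<forall>i<n. x $ i = 0" and f: "\<forall>i<2*n. f i = x $ i" by blast
    have xc: "x \<in> carrier_vec (2*n)" and Mx: "MM *\<^sub>v x = x" using x unfolding Lp_def by auto
    have ev: "\<forall>i<2*n. even (x $ i)"
    proof (intro allI impI)
      fix i assume i: "i < 2*n"
      have "[(Pm *\<^sub>v x) $ i = (E1 *\<^sub>v x) $ i] (mod 2)" by (rule mcong_mult_vec[OF Pm_E1]) (use xc i in auto)
      hence "[x $ i = 0] (mod 2)" using Pm_fix[OF x] E1_vec[OF xc i] t unfolding topv_def by (cases "i < n") auto
      thus "even (x $ i)" by (simp add: cong_0_iff)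
    qed
    define x' where "x' = vec (2*n) (\<lambda>i. x $ i div 2)"
    have x'c: "x' \<in> carrier_vec (2*n)" unfolding x'_def by simp
    have xx': "x = 2 \<cdot>\<^sub>v x'" unfolding x'_def by (rule eq_vecI) (use xc ev in auto)
    have "MM *\<^sub>v x' = x'"
    proof (rule smult2_cancel_vec[of _ "2*n"])
      show "2 \<cdot>\<^sub>v (MM *\<^sub>v x') = 2 \<cdot>\<^sub>v x'"
        using Mx unfolding xx' by (simp add: mat_mult_smult_vec[of _ "2*n" "2*n"] x'c)
    qed (use x'c in auto)
    hence "x' \<in> Lp" unfolding Lp_def using x'c by auto
    moreover have "\<forall>i<n. x' $ i = 0" using t unfolding x'_def by auto
    moreover have "\<forall>i<2*n. f i div 2 = x' $ i" using f unfolding x'_def by auto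
    ultimately have "?P (\<lambda>i. f i div 2)" by blast
    thus "(\<forall>i<2*n. even (f i)) \<and> ?P (\<lambda>i. f i div 2)" using ev f by auto
  qed (use x t in auto)
  thus ?thesis by simp
qed

lemma om_M: assumes x: "x \<in> carrier_vec (2*n)" and y: "y \<in> carrier_vec (2*n)"
  shows "om n (MM *\<^sub>v x) (MM *\<^sub>v y) = - om n x y"
proof -
  have tt: "transpose_mat (transpose_mat MM) = MM" by simp
  have "om n (MM *\<^sub>v x) (MM *\<^sub>v y) = (transpose_mat (transpose_mat MM) *\<^sub>v x) \<bullet> (Jmat n *\<^sub>v (MM *\<^sub>v y))"
    unfolding om_def tt ..
  also have "\<dots> = x \<bullet> (transpose_mat MM *\<^sub>v (Jmat n *\<^sub>v (MM *\<^sub>v y)))"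
    by (rule transpose_vec_mult_scalar) (use x y in auto)
  also have "transpose_mat MM *\<^sub>v (Jmat n *\<^sub>v (MM *\<^sub>v y)) = (transpose_mat MM * Jmat n * MM) *\<^sub>v y"
  proof -
    have "(transpose_mat MM * Jmat n * MM) *\<^sub>v y = (transpose_mat MM * Jmat n) *\<^sub>v (MM *\<^sub>v y)"
      by (rule assoc_mult_mat_vec[of _ "2*n" "2*n"]) (use y in auto)
    also have "\<dots> = transpose_mat MM *\<^sub>v (Jmat n *\<^sub>v (MM *\<^sub>v y))"
      by (rule assoc_mult_mat_vec[of _ "2*n" "2*n"]) (use y in auto)
    finally show ?thesis by simp
  qed
  also have "\<dots> = - (Jmat n *\<^sub>v y)" unfolding MJM using y by simp
  finally show ?thesis unfolding om_def using x y by simp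
qed

lemma om_Lp: assumes "x \<in> Lp" "y \<in> Lp" shows "om n x y = 0"
  using om_M[of x y] assms unfolding Lp_def by auto

lemma om_Lm: assumes x: "x \<in> Lm" and y: "y \<in> Lm" shows "om n x y = 0"
proof -
  have xc: "x \<in> carrier_vec (2*n)" and yc: "y \<in> carrier_vec (2*n)" using x y unfolding Lm_def by auto
  have "om n (- x) (- y) = om n x y" unfolding om_def using xc yc by (simp add: mat_vec_uminus[of _ "2*n" "2*n"])
  moreover have "om n (- x) (- y) = - om n x y" using om_M[OF xc yc] x y unfolding Lm_def by auto
  ultimately show ?thesis by simp
qed

definition "Lam = (\<lambda>x. topv n x) ` Lp"

lemma col_Pm_Lp: assumes k: "k < 2*n" shows "col Pm k \<in> Lp"
proof -
  have "MM *\<^sub>v col Pm k = col (MM * Pm) k" using k by (subst col_mult2) auto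
  thus ?thesis unfolding Lp_def M_Pm using k by auto
qed

lemma top_col_Pm: "l < n \<Longrightarrow> k < 2*n \<Longrightarrow> topv n (col Pm k) l = Pm $$ (l,k)"
  unfolding topv_def by auto

lemma Lam_hyps:
  "\<forall>v\<in>Lam. \<forall>i\<ge>n. v i = 0" "\<forall>u\<in>Lam. \<forall>v\<in>Lam. (\<lambda>i. u i - v i) \<in> Lam" "\<forall>v\<in>Lam. \<forall>c. (\<lambda>i. c * v i) \<in> Lam"
    "\<forall>i<n. \<exists>v\<in>Lam. \<forall>j. [v j = (if j = i then 1 else 0)] (mod 2)"
proof -
  show "\<forall>v\<in>Lam. \<forall>i\<ge>n. v i = 0" unfolding Lam_def topv_def by auto
  show "\<forall>u\<in>Lam. \<forall>v\<in>Lam. (\<lambda>i. u i - v i) \<in> Lam"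
  proof (intro ballI)
    fix u v assume "u \<in> Lam" "v \<in> Lam"
    then obtain x y where x: "x \<in> Lp" "u = topv n x" and y: "y \<in> Lp" "v = topv n y" unfolding Lam_def by auto
    have "(\<lambda>i. u i - v i) = topv n (x - y)" using x y unfolding topv_def Lp_def by auto
    thus "(\<lambda>i. u i - v i) \<in> Lam" unfolding Lam_def using Lp_diff[OF x(1) y(1)] by auto
  qed
  show "\<forall>v\<in>Lam. \<forall>c. (\<lambda>i. c * v i) \<in> Lam"
  proof (intro ballI allI)
    fix v c assume "v \<in> Lam"
    then obtain x where x: "x \<in> Lp" "v = topv n x" unfolding Lam_def by auto
    have "(\<lambda>i. c * v i) = topv n (c \<cdot>\<^sub>v x)" using x unfolding topv_def Lp_def by auto
    thus "(\<lambda>i. c * v i) \<in> Lam" unfolding Lam_def using Lp_smult[OF x(1)] by auto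
  qed
  show "\<forall>i<n. \<exists>v\<in>Lam. \<forall>j. [v j = (if j = i then 1 else 0)] (mod 2)"
  proof (intro allI impI)
    fix i assume i: "i < n"
    have "topv n (col Pm i) \<in> Lam" unfolding Lam_def using col_Pm_Lp[of i] i by auto
    moreover have "\<forall>j. [topv n (col Pm i) j = (if j = i then 1 else 0)] (mod 2)"
    proof
      fix j
      show "[topv n (col Pm i) j = (if j = i then 1 else 0)] (mod 2)"
      proof (cases "j < n")
        case True
        have "[Pm $$ (j,i) = E1 $$ (j,i)] (mod 2)" using Pm_E1 True i unfolding mcong_def by auto
        thus ?thesis using True i top_col_Pm[of j i] unfolding E1_def by auto
      next
        case False thus ?thesis using i unfolding topv_def by auto
      qed
    qed
    ultimately show "\<exists>v\<in>Lam. \<forall>j. [v j = (if j = i then 1 else 0)] (mod 2)" by blast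
  qed
qed

definition "bb = (SOME b. (\<forall>j<n. b j \<in> Lam) \<and> (\<forall>j<n. \<forall>i. [b j i = (if i = j then 1 else 0)] (mod 2)) \<and>
     (\<forall>u\<in>Lam. \<exists>y. \<forall>i. u i = (\<Sum>j<n. y j * b j i)))"

lemma bb_props: "\<forall>j<n. bb j \<in> Lam" "\<forall>j<n. \<forall>i. [bb j i = (if i = j then 1 else 0)] (mod 2)"
     "\<forall>u\<in>Lam. \<exists>y. \<forall>i. u i = (\<Sum>j<n. y j * bb j i)"
  using someI_ex[OF lattice_basis[OF Lam_hyps]] unfolding bb_def[symmetric] by auto

definition "XX j = (SOME x. x \<in> Lp \<and> topv n x = bb j)"

lemma XX_props: assumes j: "j < n" shows "XX j \<in> Lp" "topv n (XX j) = bb j"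
proof -
  have "bb j \<in> (\<lambda>x. topv n x) ` Lp" using bb_props(1) j unfolding Lam_def by auto
  then obtain x where "x \<in> Lp" "bb j = topv n x" by blast
  hence "\<exists>x. x \<in> Lp \<and> topv n x = bb j" by auto
  from someI_ex[OF this] show "XX j \<in> Lp" "topv n (XX j) = bb j" unfolding XX_def by auto
qed

definition "cc k = (SOME y. \<forall>i. topv n (col Pm k) i = (\<Sum>j<n. y j * bb j i))"

lemma cc_prop: assumes k: "k < 2*n" shows "topv n (col Pm k) i = (\<Sum>j<n. cc k j * bb j i)"
proof -
  have "topv n (col Pm k) \<in> Lam" unfolding Lam_def using col_Pm_Lp[OF k] by auto
  hence "\<exists>y. \<forall>i. topv n (col Pm k) i = (\<Sum>j<n. y j * bb j i)" using bb_props(3) by blast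
  from someI_ex[OF this] show ?thesis unfolding cc_def by blast
qed

definition "ww j = vec (2*n) (\<lambda>k. cc k j)"

lemma XX_ww: assumes i: "i < n" and j: "j < n" shows "XX i \<bullet> ww j = (if i = j then 1 else 0)"
proof -
  let ?x = "XX i"
  have x: "?x \<in> Lp" and tx: "topv n ?x = bb i" using XX_props[OF i] by auto
  have xc: "?x \<in> carrier_vec (2*n)" using x unfolding Lp_def by auto
  define Y where "Y j = ?x \<bullet> ww j" for j
  have Yd: "Y j = (\<Sum>k = 0..<2*n. ?x $ k * cc k j)" for j unfolding Y_def ww_def scalar_prod_def by simp
  have S: "(\<Sum>j<n. Y j * bb j l) = bb i l" if l: "l < n" for l
  proof -
    have "(\<Sum>j<n. Y j * bb j l) = (\<Sum>j<n. \<Sum>k = 0..<2*n. ?x $ k * (cc k j * bb j l))"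
      unfolding Yd sum_distrib_right by (simp add: mult.assoc)
    also have "\<dots> = (\<Sum>k = 0..<2*n. ?x $ k * (\<Sum>j<n. cc k j * bb j l))"
      by (subst sum.swap) (simp add: sum_distrib_left)
    also have "\<dots> = (\<Sum>k = 0..<2*n. ?x $ k * Pm $$ (l,k))"
      by (intro sum.cong refl) (use l in \<open>simp add: cc_prop[symmetric] top_col_Pm\<close>)
    also have "\<dots> = (Pm *\<^sub>v ?x) $ l" using l xc by (auto simp: scalar_prod_def mult.commute intro!: sum.cong)
    also have "\<dots> = bb i l" using Pm_fix[OF x] tx l unfolding topv_def by (auto dest: fun_cong[of _ _ l])
    finally show ?thesis .
  qed
  have "\<forall>j<n. (\<lambda>j. Y j - (if i = j then 1 else 0)) j = 0"
  proof (rule indep[OF bb_props(2)])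
    show "\<forall>l<n. (\<Sum>j<n. (\<lambda>j. Y j - (if i = j then 1 else 0)) j * bb j l) = 0"
    proof (intro allI impI)
      fix l assume l: "l < n"
      have "(\<Sum>j<n. (Y j - (if i = j then 1 else 0)) * bb j l) = (\<Sum>j<n. Y j * bb j l) - (\<Sum>j<n. (if i = j then bb j l else 0))"
      proof -
        have "(\<Sum>j<n. (Y j - (if i = j then 1 else 0)) * bb j l) = (\<Sum>j<n. Y j * bb j l - (if i = j then bb j l else 0))"
          by (intro sum.cong) (auto simp: algebra_simps)
        thus ?thesis by (simp only: sum_subtractf)
      qed
      also have "\<dots> = 0" using S[OF l] i by simp
      finally show "(\<Sum>j<n. (\<lambda>j. Y j - (if i = j then 1 else 0)) j * bb j l) = 0" by simp
    qed
  qed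
  thus ?thesis using j unfolding Y_def by auto
qed

definition "UU j = - (Jmat n *\<^sub>v ww j)"
definition "QQ j = UU j - Pm *\<^sub>v UU j"

lemma ww_carrier[simp]: "ww j \<in> carrier_vec (2*n)" unfolding ww_def by simp
lemma UU_carrier[simp]: "UU j \<in> carrier_vec (2*n)" unfolding UU_def by simp
lemma QQ_carrier[simp]: "QQ j \<in> carrier_vec (2*n)" unfolding QQ_def by simp
lemma vec_dims[simp]: "dim_vec (QQ j) = 2*n" "dim_vec (UU j) = 2*n" "dim_vec (ww j) = 2*n"
  using QQ_carrier UU_carrier ww_carrier by (auto simp del: QQ_carrier UU_carrier ww_carrier)

lemma QQ_Lm: "QQ j \<in> Lm"
proof -
  let ?u = "UU j"
  have uc: "?u \<in> carrier_vec (2*n)" by simp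
  have P2: "2 \<cdot>\<^sub>v (Pm *\<^sub>v ?u) = ?u + MM *\<^sub>v ?u" by (rule Pm_vec[OF uc])
  have MP: "MM *\<^sub>v (Pm *\<^sub>v ?u) = Pm *\<^sub>v ?u" using Pm_Lp[OF uc] unfolding Lp_def by auto
  have "MM *\<^sub>v QQ j = MM *\<^sub>v ?u - Pm *\<^sub>v ?u" unfolding QQ_def
    using uc by (simp add: mult_minus_distrib_mat_vec[of _ "2*n" "2*n"] MP)
  also have "\<dots> = - QQ j"
  proof (rule eq_vecI)
    fix i assume "i < dim_vec (- QQ j)"
    hence i: "i < 2*n" by simp
    have "(2 \<cdot>\<^sub>v (Pm *\<^sub>v ?u)) $ i = (?u + MM *\<^sub>v ?u) $ i" using P2 by simp
    hence "2 * (Pm *\<^sub>v ?u) $ i = ?u $ i + (MM *\<^sub>v ?u) $ i" using i uc by simp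
    thus "(MM *\<^sub>v ?u - Pm *\<^sub>v ?u) $ i = (- QQ j) $ i" unfolding QQ_def using i uc by simp
  qed simp
  finally show ?thesis unfolding Lm_def by simp
qed

lemma om_XX_QQ: assumes i: "i < n" and j: "j < n" shows "om n (XX i) (QQ j) = (if i = j then 1 else 0)"
proof -
  have x: "XX i \<in> Lp" using XX_props[OF i] by auto
  have xc: "XX i \<in> carrier_vec (2*n)" using x unfolding Lp_def by auto
  have "om n (XX i) (QQ j) = om n (XX i) (UU j) - om n (XX i) (Pm *\<^sub>v UU j)"
    unfolding om_def QQ_def using xc
    by (simp add: mult_minus_distrib_mat_vec[of _ "2*n" "2*n"] scalar_prod_minus_distrib[of _ "2*n"])
  also have "om n (XX i) (Pm *\<^sub>v UU j) = 0" by (rule om_Lp[OF x Pm_Lp]) simp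
  also have "om n (XX i) (UU j) = XX i \<bullet> ww j"
  proof -
    have a: "(Jmat n * Jmat n) *\<^sub>v ww j = Jmat n *\<^sub>v (Jmat n *\<^sub>v ww j)"
      by (rule assoc_mult_mat_vec[of _ "2*n" "2*n" _ "2*n"]) auto
    have "Jmat n *\<^sub>v UU j = - ((Jmat n * Jmat n) *\<^sub>v ww j)" unfolding UU_def a
      by (simp add: mat_vec_uminus[of _ "2*n" "2*n"])
    also have "\<dots> = ww j" unfolding J_J by (rule eq_vecI) auto
    finally show ?thesis unfolding om_def by simp
  qed
  finally show ?thesis using XX_ww[OF i j] by simp
qed

definition "gg = mat (2*n) (2*n) (\<lambda>(i,j). if j < n then XX j $ i else QQ (j - n) $ i)"

lemma gg_carrier[simp]: "gg \<in> carrier_mat (2*n) (2*n)" unfolding gg_def by simp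
lemma gg_dims[simp]: "dim_row gg = 2*n" "dim_col gg = 2*n" unfolding gg_def by simp_all

lemma col_gg: "j < 2*n \<Longrightarrow> col gg j = (if j < n then XX j else QQ (j - n))"
proof -
  assume j: "j < 2*n"
  show ?thesis
  proof (cases "j < n")
    case True
    hence c: "dim_vec (XX j) = 2*n" using XX_props[OF True] unfolding Lp_def by auto
    show ?thesis by (rule eq_vecI) (use j c True in \<open>auto simp: gg_def\<close>)
  next
    case False
    show ?thesis by (rule eq_vecI) (use j False in \<open>auto simp: gg_def\<close>)
  qed
qed

lemma gg_Sp: "gg \<in> Sp n"
proof -
  have c: "XX j \<in> carrier_vec (2*n)" if "j < n" for j using XX_props[OF that] unfolding Lp_def by auto
  have "transpose_mat gg * Jmat n * gg = Jmat n"
  proof (rule eq_matI)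
    fix i j assume "i < dim_row (Jmat n)" "j < dim_col (Jmat n)"
    hence ij: "i < 2*n" "j < 2*n" by auto
    have "(transpose_mat gg * Jmat n * gg) $$ (i,j) = (transpose_mat gg * (Jmat n * gg)) $$ (i,j)"
      by (simp add: sq_assoc[where k="2*n"])
    also have "\<dots> = om n (col gg i) (col gg j)"
    proof -
      have "col (Jmat n * gg) j = Jmat n *\<^sub>v col gg j" by (rule col_mult2) (use ij in auto)
      thus ?thesis unfolding om_def using ij by simp
    qed
    also have "\<dots> = Jmat n $$ (i,j)"
    proof (cases "i < n")
      case True
      show ?thesis
      proof (cases "j < n")
        case True
        thus ?thesis using \<open>i < n\<close> ij col_gg om_Lp XX_props by (simp add: Jmat_index)
      next
        case False
        have "om n (XX i) (QQ (j - n)) = (if i = j - n then 1 else 0)" by (rule om_XX_QQ) (use True False ij in auto)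
        thus ?thesis using True False ij col_gg by (auto simp: Jmat_index)
      qed
    next
      case False
      show ?thesis
      proof (cases "j < n")
        case True
        have "om n (XX j) (QQ (i - n)) = (if j = i - n then 1 else 0)" by (rule om_XX_QQ) (use True False ij in auto)
        moreover have "om n (QQ (i - n)) (XX j) = - om n (XX j) (QQ (i - n))" by (rule om_anti) (use c True in auto)
        ultimately show ?thesis using True False ij col_gg by (auto simp: Jmat_index)
      next
        case False
        thus ?thesis using \<open>\<not> i < n\<close> ij col_gg om_Lm QQ_Lm by (simp add: Jmat_index)
      qed
    qed
    finally show "(transpose_mat gg * Jmat n * gg) $$ (i,j) = Jmat n $$ (i,j)" .
  qed auto
  thus ?thesis unfolding Sp_def by simp
qed

lemma MM_gg: "MM * gg = gg * sig n"
proof (rule eq_matI)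
  fix i j assume "i < dim_row (gg * sig n)" "j < dim_col (gg * sig n)"
  hence ij: "i < 2*n" "j < 2*n" by auto
  have "(MM * gg) $$ (i,j) = (MM *\<^sub>v col gg j) $ i" using ij by simp
  also have "\<dots> = gg $$ (i,j) * sg n j"
  proof (cases "j < n")
    case True
    have "MM *\<^sub>v XX j = XX j" using XX_props[OF True] unfolding Lp_def by auto
    thus ?thesis using True ij col_gg[of j] unfolding sg_def by (simp add: gg_def)
  next
    case False
    have "MM *\<^sub>v QQ (j - n) = - QQ (j - n)" using QQ_Lm unfolding Lm_def by auto
    thus ?thesis using False ij col_gg[of j] unfolding sg_def by (simp add: gg_def)
  qed
  also have "\<dots> = (gg * sig n) $$ (i,j)" by (rule mult_sig_index[symmetric]) (use ij in auto)
  finally show "(MM * gg) $$ (i,j) = (gg * sig n) $$ (i,j)" .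
qed auto

lemma tau_gg: "tau n gg = \<gamma> * gg"
proof -
  have "tau n gg = sig n * (gg * sig n)" using tau_sig[OF gg_carrier] by (simp add: sq_assoc[where k="2*n"])
  also have "\<dots> = (sig n * sig n) * \<gamma> * gg" unfolding MM_gg[symmetric] MM_def using gcar
    by (simp add: sq_assoc[where k="2*n"])
  also have "\<dots> = \<gamma> * gg" unfolding sig_sig using gcar by simp
  finally show ?thesis .
qed

lemma gg_tau_cong: "mcong (4*m) (tau n gg) gg"
proof -
  have "mcong (4*m) (\<gamma> * gg) (1\<^sub>m (2*n) * gg)" by (rule mcong_mult[OF gmod mcong_refl]) (use gcar in simp)
  thus ?thesis unfolding tau_gg by simp
qed

lemma gg_off: assumes ij: "i < 2*n" "j < 2*n" "(i < n) \<noteq> (j < n)" shows "[gg $$ (i,j) = 0] (mod 2)"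
proof -
  have "[tau n gg $$ (i,j) = gg $$ (i,j)] (mod 4*m)" using gg_tau_cong ij unfolding mcong_def by auto
  hence "[- gg $$ (i,j) = gg $$ (i,j)] (mod 4*m)" using ij unfolding tau_def by auto
  hence "[gg $$ (i,j) = 0] (mod 2*m)" by (simp add: cong_neg_self)
  thus ?thesis by (rule cong_dvd_modulus) simp
qed

lemma gg_mod2: "mcong 2 gg (1\<^sub>m (2*n))"
  unfolding mcong_def
proof (intro conjI allI impI)
  fix i j assume "i < dim_row gg" "j < dim_col gg"
  hence ij: "i < 2*n" "j < 2*n" by auto
  show "[gg $$ (i,j) = 1\<^sub>m (2*n) $$ (i,j)] (mod 2)"
  proof (cases "(i < n) = (j < n)")
    case False
    thus ?thesis using gg_off[OF ij False] ij by auto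
  next
    case True
    show ?thesis
    proof (cases "i < n")
      case True
      hence jn: "j < n" using \<open>(i < n) = (j < n)\<close> by simp
      have "gg $$ (i,j) = bb j i" using XX_props(2)[OF jn] True jn ij unfolding gg_def topv_def
        by (auto dest: fun_cong[of _ _ i])
      thus ?thesis using bb_props(2) jn ij by auto
    next
      case False
      hence jn: "\<not> j < n" using \<open>(i < n) = (j < n)\<close> by simp
      define il where "il = i - n"
      define jl where "jl = j - n"
      have il: "il < n" "i = il + n" and jl: "jl < n" using ij False jn unfolding il_def jl_def by auto
      have xc: "XX il \<in> carrier_vec (2*n)" using XX_props(1)[OF il(1)] unfolding Lp_def by auto
      have xcong: "[XX il $ k = unit_vec (2*n) il $ k] (mod 2)" if k: "k < 2*n" for k
      proof (cases "k < n")
        case True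
        have "XX il $ k = bb il k" using XX_props(2)[OF il(1)] True unfolding topv_def by (auto dest: fun_cong[of _ _ k])
        thus ?thesis using bb_props(2) il True k by auto
      next
        case False
        have "XX il $ k = gg $$ (k, il)" unfolding gg_def using k il by auto
        moreover have "[gg $$ (k, il) = 0] (mod 2)" by (rule gg_off) (use k il False in auto)
        ultimately show ?thesis using False il k by auto
      qed
      let ?z = "Jmat n *\<^sub>v QQ jl"
      have zc: "?z \<in> carrier_vec (2*n)" by simp
      have "[XX il \<bullet> ?z = unit_vec (2*n) il \<bullet> ?z] (mod 2)"
        unfolding scalar_prod_def using xc zc xcong by (auto intro!: cong_sum cong_mult)
      moreover have "unit_vec (2*n) il \<bullet> ?z = QQ jl $ i"
        using il zc by (simp add: J_mult_vec)
      moreover have "XX il \<bullet> ?z = (if il = jl then 1 else 0)" using om_XX_QQ[OF il(1) jl] unfolding om_def .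
      moreover have "gg $$ (i,j) = QQ jl $ i" unfolding gg_def jl_def using ij jn by auto
      moreover have "(il = jl) = (i = j)" unfolding il_def jl_def using False jn by auto
      ultimately show ?thesis using ij by (auto simp: cong_sym_eq)
    qed
  qed
qed (auto)

lemma gg_G: "gg \<in> Gamma_2m_2 n m"
  unfolding Gamma_2m_2_iff[OF m1] using gg_Sp gg_mod2 gg_tau_cong by auto

end

lemma surj_key': assumes m: "m \<ge> 1" and c: "\<gamma> \<in> cocycles n (4*m)"
  shows "\<exists>g \<in> Gamma_2m_2 n m. tau n g = \<gamma> * g"
  using gg_G[OF m c] tau_gg[OF m c] by blast

theorem lemma4p2:
  fixes n :: nat and m :: int
  assumes "m \<ge> 1"
  shows "\<exists>F. (\<forall>g \<in> Gamma_2m_2 n m.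
              F (dcoset n (4*m) g) = coh_class n (4*m) (tau n g * int_mat_inv g))
          \<and> bij_betw F (double_cosets n m) (H1 n (4*m))"
proof -
  note m = assms
  let ?G = "Gamma_2m_2 n m"
  let ?R = "cohomologous n (4*m)"
  define rep where "rep D = (SOME g. g \<in> ?G \<and> D = dcoset n (4*m) g)" for D
  define F where "F D = coh_class n (4*m) (gam n (rep D))" for D
  note EQ = coh_equiv[of n "4*m"]
  have Fg: "F (dcoset n (4*m) g) = coh_class n (4*m) (gam n g)" if g: "g \<in> ?G" for g
  proof -
    have ex: "\<exists>g'. g' \<in> ?G \<and> dcoset n (4*m) g = dcoset n (4*m) g'" using g by blast
    have r: "rep (dcoset n (4*m) g) \<in> ?G" "dcoset n (4*m) g = dcoset n (4*m) (rep (dcoset n (4*m) g))"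
      unfolding rep_def using someI_ex[OF ex] by auto
    have gc: "g \<in> carrier_mat (2*n) (2*n)" using G_Sp[OF m g] Sp_carrier by auto
    have "g \<in> dcoset n (4*m) (rep (dcoset n (4*m) g))" using self_dcoset[OF gc] r(2) by simp
    from gam_wd[OF m r(1) g this] have "(gam n (rep (dcoset n (4*m) g)), gam n g) \<in> ?R" .
    hence "?R `` {gam n (rep (dcoset n (4*m) g))} = ?R `` {gam n g}"
      using eq_equiv_class_iff[OF EQ] gam_cocycle[OF m r(1)] gam_cocycle[OF m g] by blast
    thus ?thesis unfolding F_def coh_class_def by simp
  qed
  show ?thesis
  proof (intro exI[of _ F] conjI ballI)
    fix g assume "g \<in> ?G"
    thus "F (dcoset n (4*m) g) = coh_class n (4*m) (tau n g * int_mat_inv g)" using Fg gam_def by simp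
  next
    show "bij_betw F (double_cosets n m) (H1 n (4*m))" unfolding bij_betw_def
    proof
      show "inj_on F (double_cosets n m)"
      proof (rule inj_onI)
        fix D1 D2 assume "D1 \<in> double_cosets n m" "D2 \<in> double_cosets n m" and FD: "F D1 = F D2"
        then obtain g1 g2 where g1: "g1 \<in> ?G" and g2: "g2 \<in> ?G" and D1: "D1 = dcoset n (4*m) g1"
          and D2: "D2 = dcoset n (4*m) g2" unfolding double_cosets_def by blast
        have "?R `` {gam n g1} = ?R `` {gam n g2}" using FD Fg[OF g1] Fg[OF g2] unfolding D1 D2 coh_class_def by simp
        hence "(gam n g1, gam n g2) \<in> ?R"
          using eq_equiv_class_iff[OF EQ] gam_cocycle[OF m g1] gam_cocycle[OF m g2] by blast
        from gam_inj[OF m g1 g2 this] obtain a u where geq: "g2 = a * g1 * u"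
          and a: "a \<in> Gamma_princ n (4*m)" and u: "u \<in> Gamma_l_2 n" unfolding dcoset_def by blast
        have "g1 \<in> carrier_mat (2*n) (2*n)" using G_Sp[OF m g1] Sp_carrier by auto
        from dcoset_eq[OF this a u] show "D1 = D2" unfolding D1 D2 geq by simp
      qed
      show "F ` double_cosets n m = H1 n (4*m)"
      proof
        show "F ` double_cosets n m \<subseteq> H1 n (4*m)"
        proof
          fix X assume "X \<in> F ` double_cosets n m"
          then obtain g where g: "g \<in> ?G" and X: "X = F (dcoset n (4*m) g)" unfolding double_cosets_def by blast
          show "X \<in> H1 n (4*m)" unfolding X Fg[OF g] H1_def coh_class_def
            by (rule quotientI[OF gam_cocycle[OF m g]])
        qed
        show "H1 n (4*m) \<subseteq> F ` double_cosets n m"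
        proof
          fix X assume "X \<in> H1 n (4*m)"
          then obtain x where X: "X = ?R `` {x}" and x: "x \<in> cocycles n (4*m)" unfolding H1_def by (rule quotientE)
          obtain g where g: "g \<in> ?G" and tg: "tau n g = x * g" using surj_key'[OF m x] by blast
          have gS: "g \<in> Sp n" using G_Sp[OF m g] .
          have xc: "x \<in> carrier_mat (2*n) (2*n)" using x unfolding cocycles_def using Gamma_princ_carrier by auto
          have "x = gam n g" by (rule gam_unique[OF gS xc tg[symmetric]])
          hence "X = F (dcoset n (4*m) g)" unfolding X Fg[OF g] coh_class_def by simp
          thus "X \<in> F ` double_cosets n m" unfolding double_cosets_def using g by blast
        qed
      qed
    qed
  qed
qed

end
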